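(* Let $uv$ be a decomposable word, with $u=w_1\cdots w_k$. Suppose that site $j_0$ of $u$ is empty ($u_{j_0}=\infty$), and that there is a site $j$ with $j_0<j\le k$ such that $u_j$ is a particle of maximal size (the largest finite entry of $uv$) and no entry of $u$ strictly between positions $j_0$ and $j$ is empty or of maximal size. Then \[ [uv]=\sum_{u'} t_{u'_{j_0}}\,[u'v], \] where the sum extends over all words $u'$ of length $k$ (with $u'_{j_0}$ finite) such that $u'^{j_0\to}=u$, the operation $\to$ being applied to $u'$ regarded as a word of length $k$ on its own cyclic ring. Moreover, the words $u'v$ occurring on the right-hand side are decomposable and simpler than $uv$.
   Context: Fix a positive integer $n$; sites $1,\dots,n$ are arranged cyclically. A word is $w=w_1\cdots w_n\in\{1,2,\dots,\infty\}^n$; finite entries are particles, entries $\infty$ are empty sites; $\infty$ is larger than every finite entry. A type is a tuple $\mathbf m=(m_1,\dots,m_r)$ of positive integers with $m_1+\dots+m_r\le n$; a word has type $\mathbf m$ if it has exactly $m_i$ entries $i$ and all other entries $\infty$. A word $w$ is decomposable if $w=uv$ with $u=w_1\cdots w_k$, $v=w_{k+1}\cdots w_n$ and every entry of $u$ strictly larger than every entry of $v$. Queues: a queue of capacity $c$ is a choice of $c$ of the $n$ sites, called terminal. Given an input word $x$ whose finite entries lie in $\{1,\dots,i-1\}$, replace each $\infty$ by $i$; then the $n$ particles enter the queue one at a time in an order in which smaller particles come before larger ones (ties arbitrary). A particle at site $j$ first visits site $j$, then $j+1,j+2,\dots$ cyclically, stopping at (and occupying) the first terminal site not yet occupied; if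 all terminal sites are occupied it visits every site and is discarded. The output $q(x)$ has at each terminal site the size of the particle occupying it and $\infty$ at each non-terminal site. For each size $s$ let $\alpha_s$ be the number of non-terminal sites whose first visitor has size $s$; the weight of $q$ with respect to $x$ is $\prod_s t_s^{\alpha_s}$. Multi-line queues: a multi-line queue of type $(m_1,\dots,m_r)$ is a sequence $(q_1,\dots,q_r)$ of queues with $q_i$ of capacity $m_1+\dots+m_i$. Feed $q_1$ the all-$\infty$ word and $q_i$ the output of $q_{i-1}$; the output word is $w(\mathbf q)=(q_r\circ\cdots\circ q_1)(\infty\cdots\infty)$. The weight $[\mathbf q]$ is the product over $i$ of the weight of $q_i$ with respect to its input. For a word $w$, $[w]$ is the sum of $[\mathbf q]$ over all multi-line queues $\mathbf q$ with $w(\mathbf q)=w$. Jumping operation: for a word $x=x_1\cdots x_\ell$ (positions taken cyclically mod $\ell$) and an index $j_0$ with $x_{j_0}\neq\infty$, define the jumping sequence $j_1,\dots,j_s$ recursively: $j_k$ is the first position cyclically to the right of $j_{k-1}$ such that $x_{j_k}$ is finite and strictly larger than $x_{j_{k-1}}$; if no such position exists the sequence stops and $s=k-1$. Define $y=x^{j_0\to}$ by $y_{j_k}=x_{j_{k-1}}$ for $1\le k\le s$, $y_{j_0}=\infty$, and $y_j=x_j$ at all other positions. Simpler: a type $(m_1,\dots,m_s)$ is simpler than a type $(m'_1,\dots,m'_r)$ if $s<r$, or $s=r$ and $m_s>m'_r$. For words $x,y$ of the same length, $y$ is simpler than $x$ if either the type of $y$ is simpler than that of $x$, or $x,y$ have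 the same type and, letting $i,j$ be the smallest indices with $x_i=\infty$ and $y_j=\infty$, we have $i>j$. *)

theory Defs
  imports Main "HOL-Library.Extended_Nat"
begin

text \<open>Words are lists of extended naturals; \<infinity> is an empty site, finite entries
  (which must be positive) are particles.  Sites are indexed 0..n-1 (0-based).\<close>

definition is_word :: "enat list \<Rightarrow> bool" where
  "is_word w \<longleftrightarrow> (\<forall>x\<in>set w. x \<noteq> 0)"

definition maxsize :: "enat list \<Rightarrow> nat" where
  "maxsize w = Max (insert 0 {the_enat x | x. x \<in> set w \<and> x \<noteq> \<infinity>})"

definition is_type :: "nat \<Rightarrow> nat list \<Rightarrow> bool" where
  "is_type n m \<longleftrightarrow> m \<noteq> [] \<and> (\<forall>a\<in>set m. 0 < a) \<and> sum_list m \<le> n"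

text \<open>The counting tuple (m_1,...,m_r) of a word, r = largest finite entry; for a word of
  type m this is exactly m.\<close>
definition word_type :: "enat list \<Rightarrow> nat list" where
  "word_type w = map (\<lambda>i. count_list w (enat i)) [1..<Suc (maxsize w)]"

definition decomposable :: "enat list \<Rightarrow> bool" where
  "decomposable w \<longleftrightarrow> (\<exists>k. 0 < k \<and> k < length w \<and>
      (\<forall>a<k. \<forall>b. k \<le> b \<and> b < length w \<longrightarrow> w ! b < w ! a))"

definition psize :: "nat \<Rightarrow> enat list \<Rightarrow> nat \<Rightarrow> nat" where
  "psize i x p = (if x ! p = \<infinity> then i else the_enat (x ! p))"

text \<open>One particle (size s, starting site j) enters the queue with terminal set T.
  State: occupant of each site, and size of the first visitor of each site.\<close>
definition qstep :: "nat \<Rightarrow> nat set \<Rightarrow> nat \<times> nat \<Rightarrow>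
    (nat \<Rightarrow> nat option) \<times> (nat \<Rightarrow> nat option) \<Rightarrow> (nat \<Rightarrow> nat option) \<times> (nat \<Rightarrow> nat option)" where
  "qstep n T sp st = (case sp of (s, j) \<Rightarrow> (case st of (occ, fv) \<Rightarrow>
     (let D = {d. d < n \<and> (j + d) mod n \<in> T \<and> occ ((j + d) mod n) = None};
          V = (if D = {} then {..<n} else (\<lambda>e. (j + e) mod n) ` {..Min D});
          fv' = (\<lambda>q. if q \<in> V \<and> fv q = None then Some s else fv q)
      in if D = {} then (occ, fv') else (occ((j + Min D) mod n := Some s), fv'))))"

text \<open>Particles enter in order of increasing size (ties broken by site index).\<close>
definition queue_run :: "nat \<Rightarrow> nat set \<Rightarrow> nat \<Rightarrow> enat list \<Rightarrow>
    (nat \<Rightarrow> nat option) \<times> (nat \<Rightarrow> nat option)" where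
  "queue_run n T i x = fold (qstep n T) (map (\<lambda>p. (psize i x p, p)) (sort_key (psize i x) [0..<n]))
      (\<lambda>_. None, \<lambda>_. None)"

definition queue_out :: "nat \<Rightarrow> nat set \<Rightarrow> nat \<Rightarrow> enat list \<Rightarrow> enat list" where
  "queue_out n T i x = map (\<lambda>p. if p \<in> T then (case fst (queue_run n T i x) p of
      Some s \<Rightarrow> enat s | None \<Rightarrow> \<infinity>) else \<infinity>) [0..<n]"

definition queue_wt :: "(nat \<Rightarrow> 'a::comm_semiring_1) \<Rightarrow> nat \<Rightarrow> nat set \<Rightarrow> nat \<Rightarrow> enat list \<Rightarrow> 'a" where
  "queue_wt t n T i x = (\<Prod>p\<in>{..<n} - T. t (the (snd (queue_run n T i x) p)))"

fun mlq_out :: "nat \<Rightarrow> nat \<Rightarrow> nat set list \<Rightarrow> enat list \<Rightarrow> enat list" where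
  "mlq_out n i [] x = x"
| "mlq_out n i (T # Ts) x = mlq_out n (Suc i) Ts (queue_out n T i x)"

fun mlq_wt :: "(nat \<Rightarrow> 'a::comm_semiring_1) \<Rightarrow> nat \<Rightarrow> nat \<Rightarrow> nat set list \<Rightarrow> enat list \<Rightarrow> 'a" where
  "mlq_wt t n i [] x = 1"
| "mlq_wt t n i (T # Ts) x = queue_wt t n T i x * mlq_wt t n (Suc i) Ts (queue_out n T i x)"

definition is_mlq :: "nat \<Rightarrow> nat list \<Rightarrow> nat set list \<Rightarrow> bool" where
  "is_mlq n m Ts \<longleftrightarrow> is_type n m \<and> length Ts = length m \<and>
     (\<forall>i<length m. Ts ! i \<subseteq> {..<n} \<and> card (Ts ! i) = sum_list (take (Suc i) m))"

definition mlq_word :: "nat \<Rightarrow> nat set list \<Rightarrow> enat list" where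
  "mlq_word n Ts = mlq_out n 1 Ts (replicate n \<infinity>)"

definition mlq_weight :: "(nat \<Rightarrow> 'a::comm_semiring_1) \<Rightarrow> nat \<Rightarrow> nat set list \<Rightarrow> 'a" where
  "mlq_weight t n Ts = mlq_wt t n 1 Ts (replicate n \<infinity>)"

text \<open>[w], evaluated at the parameters t_1, t_2, ...\<close>
definition word_weight :: "(nat \<Rightarrow> 'a::comm_semiring_1) \<Rightarrow> enat list \<Rightarrow> 'a" where
  "word_weight t w = (\<Sum>Ts\<in>{Ts. \<exists>m. is_mlq (length w) m Ts \<and> mlq_word (length w) Ts = w}.
      mlq_weight t (length w) Ts)"

definition next_jump :: "enat list \<Rightarrow> nat \<Rightarrow> nat option" where
  "next_jump x j = (let l = length x;
      D = {d. 0 < d \<and> d < l \<and> x ! ((j + d) mod l) \<noteq> \<infinity> \<and> x ! j < x ! ((j + d) mod l)}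
    in if D = {} then None else Some ((j + Min D) mod l))"

fun jump_aux :: "enat list \<Rightarrow> nat \<Rightarrow> nat \<Rightarrow> enat list \<Rightarrow> enat list" where
  "jump_aux x j 0 y = y"
| "jump_aux x j (Suc f) y = (case next_jump x j of None \<Rightarrow> y
      | Some j' \<Rightarrow> jump_aux x j' f (y[j' := x ! j]))"

text \<open>jump x j0 is x^{j0 ->}.\<close>
definition jump :: "enat list \<Rightarrow> nat \<Rightarrow> enat list" where
  "jump x j0 = jump_aux x j0 (length x) (x[j0 := \<infinity>])"

definition simpler_type :: "nat list \<Rightarrow> nat list \<Rightarrow> bool" where
  "simpler_type ms mr \<longleftrightarrow> length ms < length mr \<or>
     (length ms = length mr \<and> ms \<noteq> [] \<and> last ms > last mr)"

definition first_inf :: "enat list \<Rightarrow> nat" where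
  "first_inf x = (LEAST i. i < length x \<and> x ! i = \<infinity>)"

definition simpler :: "enat list \<Rightarrow> enat list \<Rightarrow> bool" where
  "simpler y x \<longleftrightarrow> simpler_type (word_type y) (word_type x) \<or>
     (word_type y = word_type x \<and> (\<exists>i<length x. x ! i = \<infinity>) \<and> (\<exists>j<length y. y ! j = \<infinity>)
      \<and> first_inf y < first_inf x)"

end

theory Submission
  imports Defs "HOL-Library.Multiset"
begin


definition off :: "nat \<Rightarrow> nat \<Rightarrow> nat \<Rightarrow> nat" where
  "off n b q = (q + n - b) mod n"

lemma off_lt: "b < n \<Longrightarrow> off n b q < n"
  by (simp add: off_def)

lemma off_self[simp]: "b < n \<Longrightarrow> off n b b = 0"
  by (simp add: off_def)

lemma off_add_mod: assumes "b < n" shows "off n b ((a + d) mod n) = (off n b a + d) mod n"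
proof -
  have e1: "(a + d) mod n + n - b = (a + d) mod n + (n - b)" using assms by simp
  have e2: "a + n - b = a + (n - b)" using assms by simp
  have "((a + d) mod n + (n - b)) mod n = (a + d + (n - b)) mod n" by (rule mod_add_left_eq)
  also have "a + d + (n - b) = (a + (n - b)) + d" by simp
  also have "((a + (n - b)) + d) mod n = ((a + (n - b)) mod n + d) mod n" by (rule mod_add_left_eq[symmetric])
  finally show ?thesis unfolding off_def e1 e2 .
qed

lemma off_eq: assumes "b < n" "q < n" shows "off n b q = (if b \<le> q then q - b else q + n - b)"
proof (cases "b \<le> q")
  case True
  hence "q + n - b = (q - b) + n" using assms by simp
  hence "off n b q = (q - b) mod n" unfolding off_def by simp
  thus ?thesis using True assms by simp
next
  case False thus ?thesis using assms by (simp add: off_def)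
qed

lemma off_inj: assumes "b < n" "q < n" "r < n" "off n b q = off n b r" shows "q = r"
  using assms off_eq[OF assms(1) assms(2)] off_eq[OF assms(1) assms(3)] by (auto split: if_splits)

lemma off_zero_iff: "b < n \<Longrightarrow> q < n \<Longrightarrow> off n b q = 0 \<longleftrightarrow> q = b"
  using off_inj[of b n q b] by auto

lemma off_pos: "b < n \<Longrightarrow> o' < n \<Longrightarrow> off n b ((b + o') mod n) = o'"
  using off_add_mod[of b n b o'] by simp

lemma pos_off: assumes "b < n" "q < n" shows "(b + off n b q) mod n = q"
proof -
  have "off n b ((b + off n b q) mod n) = off n b q" using off_pos[OF assms(1) off_lt[OF assms(1)]] .
  moreover have "(b + off n b q) mod n < n" using assms by simp
  ultimately show ?thesis using off_inj[OF assms(1) _ assms(2)] by blast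
qed


definition pmx :: "enat list \<Rightarrow> nat \<Rightarrow> nat \<Rightarrow> enat" where
  "pmx x j0 q = Max {x!r | r. r < length x \<and> off (length x) j0 r < off (length x) j0 q \<and> x!r \<noteq> \<infinity>}"

definition cfv :: "enat list \<Rightarrow> nat \<Rightarrow> nat \<Rightarrow> enat" where
  "cfv x j0 q = (if q = j0 then \<infinity> else if x!q \<noteq> \<infinity> \<and> pmx x j0 q < x!q then pmx x j0 q else x!q)"

lemma pm_fin: "finite {x!r | r. r < length x \<and> P r}"
proof -
  have "{x!r | r. r < length x \<and> P r} \<subseteq> (\<lambda>r. x!r) ` {..<length x}" by auto
  thus ?thesis by (rule finite_subset) simp
qed

lemma pm_ge: "r < length x \<Longrightarrow> off (length x) j0 r < off (length x) j0 q \<Longrightarrow> x!r \<noteq> \<infinity> \<Longrightarrow> x!r \<le> pmx x j0 q"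
  unfolding pmx_def by (rule Max_ge[OF pm_fin]) auto

lemma pm_eqI: assumes "a < length x" "off (length x) j0 a < off (length x) j0 q" "x!a \<noteq> \<infinity>"
  "\<And>r. r < length x \<Longrightarrow> off (length x) j0 r < off (length x) j0 q \<Longrightarrow> x!r \<noteq> \<infinity> \<Longrightarrow> x!r \<le> x!a"
shows "pmx x j0 q = x!a"
  unfolding pmx_def by (rule Max_eqI[OF pm_fin]) (use assms in auto)

lemma pm_le: assumes "\<And>r. r < length x \<Longrightarrow> off (length x) j0 r < off (length x) j0 q \<Longrightarrow> x!r \<noteq> \<infinity> \<Longrightarrow> x!r \<le> c"
  "a < length x" "off (length x) j0 a < off (length x) j0 q" "x!a \<noteq> \<infinity>"
shows "pmx x j0 q \<le> c"
  unfolding pmx_def using assms by (subst Max_le_iff[OF pm_fin]) auto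

lemma pm_fin_val: assumes "j0 < length x" "x!j0 \<noteq> \<infinity>" "q < length x" "q \<noteq> j0"
  shows "pmx x j0 q \<noteq> \<infinity>"
proof -
  have "off (length x) j0 j0 < off (length x) j0 q" using assms off_zero_iff[of j0 "length x" q] by auto
  hence ne: "x!j0 \<in> {x!r | r. r < length x \<and> off (length x) j0 r < off (length x) j0 q \<and> x!r \<noteq> \<infinity>}"
    using assms by auto
  have "pmx x j0 q \<in> {x!r | r. r < length x \<and> off (length x) j0 r < off (length x) j0 q \<and> x!r \<noteq> \<infinity>}"
    unfolding pmx_def by (rule Max_in[OF pm_fin]) (use ne in auto)
  thus ?thesis by auto
qed

locale jctx =
  fixes x :: "enat list" and j0 :: nat
  assumes j0n: "j0 < length x"
begin

abbreviation "n \<equiv> length x"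
abbreviation "ofs q \<equiv> off (length x) j0 q"

lemma npos: "0 < n" using j0n by linarith

lemma modn: "(a::nat) mod n < n" using npos by simp

definition "Rc a \<longleftrightarrow> (\<forall>r<n. ofs r \<le> ofs a \<longrightarrow> x!r \<noteq> \<infinity> \<longrightarrow> x!r \<le> x!a)"

definition "Dn a = {d. 0 < d \<and> d < n \<and> x ! ((a + d) mod n) \<noteq> \<infinity> \<and> x ! a < x ! ((a + d) mod n)}"

lemma nj_D: "next_jump x a = (if Dn a = {} then None else Some ((a + Min (Dn a)) mod n))"
  unfolding next_jump_def Dn_def Let_def by simp

lemma D_char: assumes "a < n" "Rc a" "d \<in> Dn a"
  shows "ofs a + d < n \<and> ofs ((a + d) mod n) = ofs a + d"
proof -
  have d: "0 < d" "d < n" "x ! ((a + d) mod n) \<noteq> \<infinity>" "x ! a < x ! ((a + d) mod n)" using assms(3) unfolding Dn_def by auto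
  have e: "ofs ((a + d) mod n) = (ofs a + d) mod n" by (rule off_add_mod[OF j0n])
  have oa: "ofs a < n" by (rule off_lt[OF j0n])
  show ?thesis
  proof (cases "ofs a + d < n")
    case True thus ?thesis using e by simp
  next
    case False
    hence "(ofs a + d) mod n = ofs a + d - n" using d oa
      by (simp add: le_mod_geq less_diff_conv2 mod_if)
    hence "ofs ((a + d) mod n) \<le> ofs a" using e d by simp
    hence "x ! ((a + d) mod n) \<le> x ! a" using assms(2) d(3) modn unfolding Rc_def by blast
    thus ?thesis using d(4) by simp
  qed
qed

lemma nj_some: assumes "a < n" "x!a \<noteq> \<infinity>" "Rc a" "r0 < n" "ofs a < ofs r0" "x!r0 \<noteq> \<infinity>" "x!a < x!r0"
  shows "\<exists>b. next_jump x a = Some b \<and> b < n \<and> ofs a < ofs b \<and> x!b \<noteq> \<infinity> \<and> x!a < x!b \<and>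
     (\<forall>r<n. ofs a < ofs r \<and> ofs r < ofs b \<longrightarrow> \<not>(x!r \<noteq> \<infinity> \<and> x!a < x!r))"
proof -
  define d0 where "d0 = ofs r0 - ofs a"
  have or0: "ofs r0 < n" by (rule off_lt[OF j0n])
  have "ofs ((a + d0) mod n) = (ofs a + d0) mod n" by (rule off_add_mod[OF j0n])
  also have "\<dots> = ofs r0" using assms(5) or0 by (simp add: d0_def)
  finally have "(a + d0) mod n = r0" using off_inj[OF j0n modn assms(4)] by blast
  hence d0D: "d0 \<in> Dn a" using assms or0 unfolding Dn_def d0_def by auto
  hence ne: "Dn a \<noteq> {}" by auto
  have fin: "finite (Dn a)" unfolding Dn_def by auto
  define dm where "dm = Min (Dn a)"
  have dmD: "dm \<in> Dn a" unfolding dm_def using Min_in[OF fin ne] .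
  have dmle: "\<And>d. d \<in> Dn a \<Longrightarrow> dm \<le> d" unfolding dm_def using Min_le[OF fin] by auto
  define b where "b = (a + dm) mod n"
  have nj: "next_jump x a = Some b" using ne unfolding nj_D b_def dm_def by simp
  have c: "ofs a + dm < n" "ofs b = ofs a + dm" using D_char[OF assms(1) assms(3) dmD] unfolding b_def by auto
  have dm: "0 < dm" "x ! b \<noteq> \<infinity>" "x ! a < x ! b" using dmD unfolding Dn_def b_def by auto
  have bn: "b < n" unfolding b_def by (rule modn)
  have mn: "\<forall>r<n. ofs a < ofs r \<and> ofs r < ofs b \<longrightarrow> \<not>(x!r \<noteq> \<infinity> \<and> x!a < x!r)"
  proof (intro allI impI notI)
    fix r assume r: "r < n" "ofs a < ofs r \<and> ofs r < ofs b" "x!r \<noteq> \<infinity> \<and> x!a < x!r"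
    define d where "d = ofs r - ofs a"
    have "ofs ((a + d) mod n) = (ofs a + d) mod n" by (rule off_add_mod[OF j0n])
    also have "\<dots> = ofs r" using r c by (simp add: d_def)
    finally have "(a + d) mod n = r" using off_inj[OF j0n modn r(1)] by blast
    hence "d \<in> Dn a" using r c unfolding Dn_def d_def by auto
    hence "dm \<le> d" by (rule dmle)
    thus False using r(2) c(2) unfolding d_def by linarith
  qed
  show ?thesis using nj bn c dm mn by auto
qed

lemma nj_none: assumes "a < n" "Rc a" "\<not>(\<exists>r<n. ofs a < ofs r \<and> x!r \<noteq> \<infinity> \<and> x!a < x!r)"
  shows "next_jump x a = None"
proof -
  have "Dn a = {}"
  proof (rule ccontr)
    assume "Dn a \<noteq> {}"
    then obtain d where dD: "d \<in> Dn a" by auto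
    have c: "ofs a + d < n" "ofs ((a + d) mod n) = ofs a + d" using D_char[OF assms(1,2) dD] by auto
    have "0 < d" "x ! ((a + d) mod n) \<noteq> \<infinity>" "x ! a < x ! ((a + d) mod n)" using dD unfolding Dn_def by auto
    moreover have "(a + d) mod n < n" by (rule modn)
    ultimately show False using assms(3) c by (metis less_add_same_cancel1)
  qed
  thus ?thesis unfolding nj_D by simp
qed

lemma ja: "a < n \<Longrightarrow> x!a \<noteq> \<infinity> \<Longrightarrow> Rc a \<Longrightarrow> length y = n \<Longrightarrow>
   (\<forall>q<n. y!q = (if ofs q \<le> ofs a then cfv x j0 q else x!q)) \<Longrightarrow> n \<le> f + 1 + ofs a \<Longrightarrow>
   jump_aux x a f y = map (cfv x j0) [0..<n]"
proof (induction f arbitrary: a y)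
  case 0
  have "\<forall>q<n. ofs q \<le> ofs a" using 0 off_lt[OF j0n] by (metis add_0 less_Suc_eq_le plus_1_eq_Suc add.commute order.trans less_imp_le_nat le_antisym not_less)
  hence "y = map (cfv x j0) [0..<n]" using 0 by (intro nth_equalityI) auto
  thus ?case by simp
next
  case (Suc f)
  show ?case
  proof (cases "\<exists>r<n. ofs a < ofs r \<and> x!r \<noteq> \<infinity> \<and> x!a < x!r")
    case False
    have nj: "next_jump x a = None" by (rule nj_none[OF Suc.prems(1,3) False])
    have "y = map (cfv x j0) [0..<n]"
    proof (intro nth_equalityI)
      show "length y = length (map (cfv x j0) [0..<n])" using Suc by simp
      fix q assume "q < length y"
      hence q: "q < n" using Suc by simp
      show "y ! q = map (cfv x j0) [0..<n] ! q"
      proof (cases "ofs q \<le> ofs a")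
        case True thus ?thesis using Suc q by simp
      next
        case F: False
        have qj: "q \<noteq> j0" using F j0n by auto
        have "x!a \<le> pmx x j0 q" using pm_ge[of a x j0 q] Suc F by simp
        moreover have "x!q \<noteq> \<infinity> \<longrightarrow> x!q \<le> x!a" using False q F by (meson not_le)
        ultimately have "cfv x j0 q = x!q" unfolding cfv_def using qj by (auto dest: order.trans)
        thus ?thesis using Suc q F by simp
      qed
    qed
    thus ?thesis using nj by simp
  next
    case True
    then obtain r0 where r0: "r0 < n" "ofs a < ofs r0" "x!r0 \<noteq> \<infinity>" "x!a < x!r0" by auto
    obtain b where b: "next_jump x a = Some b" "b < n" "ofs a < ofs b" "x!b \<noteq> \<infinity>" "x!a < x!b"
      "\<forall>r<n. ofs a < ofs r \<and> ofs r < ofs b \<longrightarrow> \<not>(x!r \<noteq> \<infinity> \<and> x!a < x!r)"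
      using nj_some[OF Suc.prems(1,2,3) r0] by blast
    have lowle: "\<And>r. r < n \<Longrightarrow> ofs r < ofs b \<Longrightarrow> x!r \<noteq> \<infinity> \<Longrightarrow> x!r \<le> x!a"
    proof -
      fix r assume r: "r < n" "ofs r < ofs b" "x!r \<noteq> \<infinity>"
      show "x!r \<le> x!a"
      proof (cases "ofs r \<le> ofs a")
        case True thus ?thesis using Suc.prems(3) r unfolding Rc_def by auto
      next
        case False thus ?thesis using b(6) r by (meson not_le)
      qed
    qed
    have pmq: "\<And>q. q < n \<Longrightarrow> ofs a < ofs q \<Longrightarrow> ofs q \<le> ofs b \<Longrightarrow> pmx x j0 q = x!a"
      using lowle Suc.prems by (intro pm_eqI) (auto)
    have Rb: "Rc b" unfolding Rc_def
    proof (intro allI impI)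
      fix r assume r: "r < n" "ofs r \<le> ofs b" "x!r \<noteq> \<infinity>"
      show "x!r \<le> x!b"
      proof (cases "ofs r = ofs b")
        case True thus ?thesis using off_inj[OF j0n r(1) b(2)] by simp
      next
        case False thus ?thesis using lowle[of r] r b(5) by simp
      qed
    qed
    have ynew: "\<forall>q<n. (y[b := x!a])!q = (if ofs q \<le> ofs b then cfv x j0 q else x!q)"
    proof (intro allI impI)
      fix q assume q: "q < n"
      show "(y[b := x!a])!q = (if ofs q \<le> ofs b then cfv x j0 q else x!q)"
      proof (cases "q = b")
        case True
        have "b \<noteq> j0" using b(3) j0n by auto
        hence "cfv x j0 b = x!a" unfolding cfv_def using pmq[of b] b by auto
        thus ?thesis using True Suc.prems(4) b(2) by simp
      next
        case qb: False
        have "(y[b := x!a])!q = y!q" using qb by simp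
        moreover have "ofs q \<noteq> ofs b" using qb off_inj[OF j0n q b(2)] by auto
        moreover have "ofs a < ofs q \<Longrightarrow> ofs q < ofs b \<Longrightarrow> cfv x j0 q = x!q"
        proof -
          assume h: "ofs a < ofs q" "ofs q < ofs b"
          have "q \<noteq> j0" using h j0n by auto
          thus "cfv x j0 q = x!q" unfolding cfv_def using pmq[of q] h b(6) q by auto
        qed
        ultimately show ?thesis using Suc.prems(5) q b(3) by (auto simp: not_le)
      qed
    qed
    have "jump_aux x b f (y[b := x!a]) = map (cfv x j0) [0..<n]"
      by (rule Suc.IH[OF b(2) b(4) Rb _ ynew]) (use Suc.prems b(3) in auto)
    thus ?thesis using b(1) by simp
  qed
qed

theorem jump_cf: assumes "x!j0 \<noteq> \<infinity>" shows "jump x j0 = map (cfv x j0) [0..<n]"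
proof -
  have R: "Rc j0" unfolding Rc_def
  proof (intro allI impI)
    fix r assume "r < n" "ofs r \<le> ofs j0" "x!r \<noteq> \<infinity>"
    hence "r = j0" using off_zero_iff[OF j0n] j0n by simp
    thus "x!r \<le> x!j0" by simp
  qed
  have "\<forall>q<n. (x[j0 := \<infinity>])!q = (if ofs q \<le> ofs j0 then cfv x j0 q else x!q)"
    using off_zero_iff[OF j0n] j0n by (auto simp: cfv_def)
  thus ?thesis unfolding jump_def by (intro ja[OF j0n assms R]) (auto simp: j0n)
qed

end


lemma len_jump_aux: "length (jump_aux x j f y) = length y"
  by (induction f arbitrary: j y) (auto split: option.split)

lemma len_jump[simp]: "length (jump x j) = length x"
  unfolding jump_def by (simp add: len_jump_aux)

lemma pm_cong: assumes "length x = length x'" "\<And>r. r < length x \<Longrightarrow> off (length x) j0 r < off (length x) j0 q \<Longrightarrow> x!r = x'!r"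
  shows "pmx x j0 q = pmx x' j0 q"
proof -
  have "{x!r | r. r < length x \<and> off (length x) j0 r < off (length x) j0 q \<and> x!r \<noteq> \<infinity>} =
        {x'!r | r. r < length x' \<and> off (length x') j0 r < off (length x') j0 q \<and> x'!r \<noteq> \<infinity>}"
  proof (intro set_eqI iffI)
    fix e assume "e \<in> {x!r | r. r < length x \<and> off (length x) j0 r < off (length x) j0 q \<and> x!r \<noteq> \<infinity>}"
    then obtain r where r: "e = x!r" "r < length x" "off (length x) j0 r < off (length x) j0 q" "x!r \<noteq> \<infinity>" by blast
    have "x!r = x'!r" using assms(2) r(2,3) .
    thus "e \<in> {x'!r | r. r < length x' \<and> off (length x') j0 r < off (length x') j0 q \<and> x'!r \<noteq> \<infinity>}"
      using r assms(1) by auto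
  next
    fix e assume "e \<in> {x'!r | r. r < length x' \<and> off (length x') j0 r < off (length x') j0 q \<and> x'!r \<noteq> \<infinity>}"
    then obtain r where r: "e = x'!r" "r < length x'" "off (length x') j0 r < off (length x') j0 q" "x'!r \<noteq> \<infinity>" by blast
    have "x!r = x'!r" using assms r by simp
    thus "e \<in> {x!r | r. r < length x \<and> off (length x) j0 r < off (length x) j0 q \<and> x!r \<noteq> \<infinity>}"
      using r assms(1) by force
  qed
  thus ?thesis unfolding pmx_def by simp
qed

lemma cfv_cong: assumes "length x = length x'" "\<And>r. r < length x \<Longrightarrow> off (length x) j0 r \<le> off (length x) j0 q \<Longrightarrow> x!r = x'!r"
  "q < length x" shows "cfv x j0 q = cfv x' j0 q"
proof -
  have "pmx x j0 q = pmx x' j0 q" by (rule pm_cong) (use assms in auto)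
  moreover have "x!q = x'!q" using assms by auto
  ultimately show ?thesis unfolding cfv_def by simp
qed

locale sctx = jctx +
  fixes s BIG :: nat
  assumes j0fin: "x!j0 \<noteq> \<infinity>"
  and vals: "\<And>q. q < length x \<Longrightarrow> x!q \<noteq> \<infinity> \<Longrightarrow> x!q \<le> enat s \<or> x!q = enat BIG"
  and sB: "s < BIG"
begin

definition "F = {q. q < n \<and> x!q = enat BIG}"

lemma le_BIG: assumes "q < n" "x!q \<noteq> \<infinity>" shows "x!q \<le> enat BIG"
proof (cases "x!q \<le> enat s")
  case True
  have "enat s \<le> enat BIG" using sB by simp
  with True show ?thesis by (rule order.trans)
next
  case False thus ?thesis using vals[OF assms] by simp
qed

lemma pm_BIG: assumes "r \<in> F" "ofs r < ofs q" shows "pmx x j0 q = enat BIG"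
proof -
  have "pmx x j0 q = x!r" by (rule pm_eqI) (use assms le_BIG in \<open>auto simp: F_def\<close>)
  thus ?thesis using assms by (simp add: F_def)
qed

lemma pm_le_s: assumes "\<And>r. r \<in> F \<Longrightarrow> ofs q \<le> ofs r" "q < n" "q \<noteq> j0" shows "pmx x j0 q \<le> enat s"
proof (rule pm_le[of x j0 q _ j0])
  fix r assume r: "r < n" "ofs r < ofs q" "x!r \<noteq> \<infinity>"
  have "r \<notin> F" using assms(1) r by fastforce
  thus "x!r \<le> enat s" using vals r by (auto simp: F_def)
next
  show "j0 < n" by (rule j0n)
  show "ofs j0 < ofs q" using off_zero_iff[OF j0n assms(2)] assms j0n by simp
  show "x!j0 \<noteq> \<infinity>" by (rule j0fin)
qed

lemma S1: assumes "h \<in> F" "\<And>q. q \<in> F \<Longrightarrow> ofs h \<le> ofs q" "q < n"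
  shows "jump x j0 ! q = enat BIG \<longleftrightarrow> q \<in> F \<and> q \<noteq> h"
proof -
  have hn: "h < n" using assms by (simp add: F_def)
  have jq: "jump x j0 ! q = cfv x j0 q" using jump_cf[OF j0fin] assms(3) by simp
  show ?thesis
  proof (cases "q = j0")
    case True
    have "q \<in> F \<Longrightarrow> q = h" using True assms(2) off_zero_iff[OF j0n hn] j0n by fastforce
    thus ?thesis using jq True by (auto simp: cfv_def)
  next
    case qj: False
    show ?thesis
    proof (cases "ofs h < ofs q")
      case True
      have "pmx x j0 q = enat BIG" by (rule pm_BIG[OF assms(1) True])
      hence "cfv x j0 q = x!q" unfolding cfv_def using qj le_BIG[OF assms(3)] by (auto simp: not_less)
      moreover have "q \<noteq> h" using True by auto
      ultimately show ?thesis using jq assms by (simp add: F_def)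
    next
      case False
      have pm: "pmx x j0 q \<le> enat s"
        by (rule pm_le_s) (use assms False qj in \<open>auto simp: not_less intro: order.trans\<close>)
      have "cfv x j0 q \<noteq> enat BIG"
      proof (cases "x!q \<noteq> \<infinity> \<and> pmx x j0 q < x!q")
        case True thus ?thesis unfolding cfv_def using qj pm sB by (auto dest: order.strict_trans1 simp: not_le)
      next
        case F2: False
        hence "cfv x j0 q = x!q" unfolding cfv_def using qj by auto
        moreover have "x!q \<noteq> enat BIG \<or> q = h"
        proof (rule ccontr)
          assume "\<not>(x!q \<noteq> enat BIG \<or> q = h)"
          hence "q \<in> F" "q \<noteq> h" using assms(3) by (auto simp: F_def)
          hence "ofs h < ofs q" using assms(2)[of q] off_inj[OF j0n hn assms(3)] by fastforce
          thus False using False by simp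
        qed
        moreover have "q = h \<Longrightarrow> x!q = enat BIG" using assms(1) by (simp add: F_def)
        moreover have pmB: "pmx x j0 q < enat BIG" using order.strict_trans1[OF pm] sB by simp
        ultimately show ?thesis using F2 by (cases "q = h") auto
      qed
      moreover have "q \<in> F \<Longrightarrow> q = h" using assms(2)[of q] False off_inj[OF j0n hn assms(3)] by fastforce
      ultimately show ?thesis using jq by auto
    qed
  qed
qed


lemma cfv_big: assumes "pmx x j0 q = enat BIG" "q < n" "q \<noteq> j0" shows "cfv x j0 q = x!q"
proof -
  have "x!q \<noteq> \<infinity> \<Longrightarrow> x!q \<le> enat BIG" using le_BIG assms(2) by blast
  hence "\<not> (x!q \<noteq> \<infinity> \<and> pmx x j0 q < x!q)" using assms(1) by (cases "x!q") (auto simp: not_less)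
  thus ?thesis unfolding cfv_def using assms(3) by auto
qed

lemma upd_sctx: assumes "q0 < n" shows "sctx (x[q0 := enat s]) j0 s BIG"
proof
  show "j0 < length (x[q0 := enat s])" using j0n by simp
  show "x[q0 := enat s] ! j0 \<noteq> \<infinity>" using j0fin assms by (cases "q0 = j0") auto
  fix q assume "q < length (x[q0 := enat s])" "x[q0 := enat s] ! q \<noteq> \<infinity>"
  thus "x[q0 := enat s] ! q \<le> enat s \<or> x[q0 := enat s] ! q = enat BIG"
    using vals[of q] assms by (cases "q = q0") auto
next
  show "s < BIG" by (rule sB)
qed

lemma jcf: "jump x j0 ! q = cfv x j0 q" if "q < n" using jump_cf[OF j0fin] that by simp

lemma jcf': assumes "q0 < n" "q < n" shows "jump (x[q0 := enat s]) j0 ! q = cfv (x[q0 := enat s]) j0 q"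
proof -
  interpret y: sctx "x[q0 := enat s]" j0 s BIG by (rule upd_sctx[OF assms(1)])
  show ?thesis using y.jcf assms by simp
qed

lemma ofs_gt0: "q < n \<Longrightarrow> q \<noteq> j0 \<Longrightarrow> 0 < ofs q"
  using off_zero_iff[OF j0n] by auto

lemma S3a: assumes h: "h \<in> F" "\<And>q. q \<in> F \<Longrightarrow> ofs h \<le> ofs q" and qA: "qA \<in> F" "qA \<noteq> h"
  shows "jump (x[qA := enat s]) j0 = (jump x j0)[qA := enat s]"
proof (rule nth_equalityI)
  show "length (jump (x[qA := enat s]) j0) = length ((jump x j0)[qA := enat s])"
    by simp
next
  interpret y: sctx "x[qA := enat s]" j0 s BIG by (rule upd_sctx) (use qA in \<open>simp add: F_def\<close>)
  have hn: "h < n" and qAn: "qA < n" using h qA by (auto simp: F_def)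
  have lt: "ofs h < ofs qA" using h(2)[OF qA(1)] off_inj[OF j0n hn qAn] qA(2) by fastforce
  fix q assume "q < length (jump (x[qA := enat s]) j0)"
  hence q: "q < n" by simp
  have L: "jump (x[qA := enat s]) j0 ! q = cfv (x[qA := enat s]) j0 q" by (rule jcf'[OF qAn q])
  show "jump (x[qA := enat s]) j0 ! q = (jump x j0)[qA := enat s] ! q"
  proof (cases "ofs q \<le> ofs h")
    case True
    have "cfv (x[qA := enat s]) j0 q = cfv x j0 q"
    proof (rule cfv_cong[symmetric])
      fix r assume "r < length x" "off (length x) j0 r \<le> off (length x) j0 q"
      hence "r \<noteq> qA" using True lt by auto
      thus "x ! r = x[qA := enat s] ! r" by simp
    qed (use q in auto)
    moreover have "q \<noteq> qA" using True lt by auto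
    ultimately show ?thesis using L jcf[OF q] qAn by simp
  next
    case False
    have qj: "q \<noteq> j0" using False j0n by auto
    have hF': "h \<in> y.F" using h(1) qA(2) by (simp add: F_def y.F_def)
    have "pmx (x[qA := enat s]) j0 q = enat BIG" using y.pm_BIG[OF hF'] False by simp
    hence "cfv (x[qA := enat s]) j0 q = x[qA := enat s] ! q" using y.cfv_big q qj by simp
    moreover have "cfv x j0 q = x!q" using cfv_big[OF pm_BIG[OF h(1)] q qj] False by simp
    ultimately show ?thesis using L jcf[OF q] qAn q by (cases "q = qA") auto
  qed
qed


lemma S3bc: assumes h: "h \<in> F" "\<And>q. q \<in> F \<Longrightarrow> ofs h \<le> ofs q"
  and h': "F = {h} \<or> (h' \<in> F \<and> h' \<noteq> h \<and> (\<forall>q\<in>F - {h}. ofs h' \<le> ofs q))"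
  shows "jump (x[h := enat s]) j0 = (if F = {h} then jump x j0 else (jump x j0)[h' := enat s])"
proof (rule nth_equalityI)
  show "length (jump (x[h := enat s]) j0) = length (if F = {h} then jump x j0 else (jump x j0)[h' := enat s])"
    by simp
next
  have hn: "h < n" using h by (auto simp: F_def)
  interpret y: sctx "x[h := enat s]" j0 s BIG by (rule upd_sctx[OF hn])
  fix q assume "q < length (jump (x[h := enat s]) j0)"
  hence q: "q < n" by simp
  have L: "jump (x[h := enat s]) j0 ! q = cfv (x[h := enat s]) j0 q" by (rule jcf'[OF hn q])
  define G where "G = (F \<noteq> {h})"
  have h'n: "G \<Longrightarrow> h' < n" "G \<Longrightarrow> h' \<in> F" "G \<Longrightarrow> h' \<noteq> h" using h' by (auto simp: G_def F_def)
  have lt': "G \<Longrightarrow> ofs h < ofs h'" using h(2)[of h'] h'n off_inj[OF j0n hn] by fastforce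
  have R: "(if F = {h} then jump x j0 else (jump x j0)[h' := enat s]) ! q =
           (if G \<and> q = h' then enat s else cfv x j0 q)"
    using jcf[OF q] h'n(1) by (auto simp: G_def)
  have R2: "(if F = {h} then jump x j0 else (jump x j0)[h' := enat s]) ! q = cfv x j0 q" if a: "\<not>(G \<and> q = h')"
    unfolding R by (rule if_not_P[OF a])
  show "jump (x[h := enat s]) j0 ! q = (if F = {h} then jump x j0 else (jump x j0)[h' := enat s]) ! q"
  proof (cases "ofs q < ofs h")
    case True
    have "cfv (x[h := enat s]) j0 q = cfv x j0 q"
    proof (rule cfv_cong[symmetric])
      fix r assume "r < length x" "off (length x) j0 r \<le> off (length x) j0 q"
      hence "r \<noteq> h" using True by auto
      thus "x ! r = x[h := enat s] ! r" by simp
    qed (use q in auto)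
    moreover have nG: "\<not>(G \<and> q = h')" using True lt' by auto
    ultimately show ?thesis using L R2[OF nG] by simp
  next
    case nlt: False
    show ?thesis
    proof (cases "q = h")
      case qh: True
      have nG: "\<not>(G \<and> q = h')" using h'n qh by auto
      show ?thesis
      proof (cases "h = j0")
        case True thus ?thesis using L R2[OF nG] qh by (simp add: cfv_def)
      next
        case hj: False
        have pmeq: "pmx (x[h := enat s]) j0 h = pmx x j0 h"
        proof (rule pm_cong[symmetric])
          fix r assume "r < length x" "off (length x) j0 r < off (length x) j0 h"
          hence "r \<noteq> h" by auto
          thus "x ! r = x[h := enat s] ! r" by simp
        qed simp
        have pmle: "pmx x j0 h \<le> enat s" by (rule pm_le_s[OF h(2) hn hj])
        have c1: "cfv (x[h := enat s]) j0 h = pmx x j0 h"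
          unfolding cfv_def using hj pmeq pmle hn by (auto simp: not_less)
        have "pmx x j0 h < enat BIG" using order.strict_trans1[OF pmle] sB by simp
        hence c2: "cfv x j0 h = pmx x j0 h" unfolding cfv_def using hj h(1) by (simp add: F_def)
        show ?thesis using L R2[OF nG] qh c1 c2 by simp
      qed
    next
      case qh: False
      have gt: "ofs h < ofs q" using nlt qh off_inj[OF j0n hn q] by fastforce
      have qj: "q \<noteq> j0" using gt j0n by auto
      have cx: "cfv x j0 q = x!q" by (rule cfv_big[OF pm_BIG[OF h(1) gt] q qj])
      show ?thesis
      proof (cases "G \<and> ofs h' < ofs q")
        case True
        have hF': "h' \<in> y.F" using h'n True by (simp add: F_def y.F_def)
        have "cfv (x[h := enat s]) j0 q = x[h := enat s] ! q"
          using y.cfv_big[OF y.pm_BIG[OF hF'] _ qj] True q by simp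
        moreover have "q \<noteq> h'" using True by auto
        ultimately show ?thesis using L R cx qh by simp
      next
        case False
        have inF: "r \<in> F \<Longrightarrow> r \<noteq> h \<Longrightarrow> ofs r < ofs q \<Longrightarrow> False" for r
        proof -
          assume r: "r \<in> F" "r \<noteq> h" "ofs r < ofs q"
          hence "G" using G_def by auto
          hence "ofs h' \<le> ofs r" using h' r by (auto simp: G_def)
          thus False using False r \<open>G\<close> by simp
        qed
        have pms0: "pmx (x[h := enat s]) j0 q = x[h := enat s] ! h"
        proof (rule pm_eqI)
          show "h < length (x[h := enat s])" using hn by simp
          show "off (length (x[h := enat s])) j0 h < off (length (x[h := enat s])) j0 q" using gt by simp
          show "x[h := enat s] ! h \<noteq> \<infinity>" using hn by simp
          fix r assume r: "r < length (x[h := enat s])" "off (length (x[h := enat s])) j0 r < off (length (x[h := enat s])) j0 q"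
            "x[h := enat s] ! r \<noteq> \<infinity>"
          show "x[h := enat s] ! r \<le> x[h := enat s] ! h"
          proof (cases "r = h")
            case True thus ?thesis by simp
          next
            case rh: False
            have "r \<notin> F" using inF[of r] rh r by auto
            thus ?thesis using vals[of r] r rh hn by (auto simp: F_def)
          qed
        qed
        have pms: "pmx (x[h := enat s]) j0 q = enat s" using pms0 hn by simp
        have notF: "q \<in> F \<Longrightarrow> G \<and> q = h'"
        proof -
          assume qF: "q \<in> F"
          hence G: "G" using qh G_def by auto
          hence "ofs h' \<le> ofs q" using h' qF qh by (auto simp: G_def)
          hence "ofs h' = ofs q" using False G by simp
          thus "G \<and> q = h'" using off_inj[OF j0n h'n(1)[OF G] q] G by simp
        qed
        show ?thesis
        proof (cases "G \<and> q = h'")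
          case True
          have "x!q = enat BIG" using True h'n by (simp add: F_def)
          hence "cfv (x[h := enat s]) j0 q = enat s" unfolding cfv_def using qj qh pms sB by simp
          thus ?thesis using L R True by simp
        next
          case F2: False
          have "q \<notin> F" using notF F2 by blast
          hence "x!q \<noteq> \<infinity> \<Longrightarrow> x!q \<le> enat s" using vals[OF q] q by (auto simp: F_def)
          hence "cfv (x[h := enat s]) j0 q = x!q" unfolding cfv_def using qj qh pms
            by (cases "x!q") (auto simp: not_less)
          thus ?thesis using L R F2 cx by simp
        qed
      qed
    qed
  qed
qed

end


definition frees :: "nat \<Rightarrow> nat set \<Rightarrow> (nat \<Rightarrow> nat option) \<Rightarrow> nat set" where
  "frees n T occ = {q. q < n \<and> q \<in> T \<and> occ q = None}"

lemma qstep_D_iff: assumes "j < n"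
  shows "d \<in> {d. d < n \<and> (j + d) mod n \<in> T \<and> occ ((j + d) mod n) = None} \<longleftrightarrow> d < n \<and> (j + d) mod n \<in> frees n T occ"
  using assms by (auto simp: frees_def)

lemma qstep_unf: "qstep n T (s, j) (occ, fv) = (let D = {d. d < n \<and> (j + d) mod n \<in> T \<and> occ ((j + d) mod n) = None};
          V = (if D = {} then {..<n} else (\<lambda>e. (j + e) mod n) ` {..Min D});
          fv' = (\<lambda>q. if q \<in> V \<and> fv q = None then Some s else fv q)
      in if D = {} then (occ, fv') else (occ((j + Min D) mod n := Some s), fv'))"
  unfolding qstep_def by (simp only: prod.case)

lemma qstep_none: assumes "j < n" "frees n T occ = {}"
  shows "qstep n T (s, j) (occ, fv) = (occ, \<lambda>q. if q < n \<and> fv q = None then Some s else fv q)"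
proof -
  have D: "{d. d < n \<and> (j + d) mod n \<in> T \<and> occ ((j + d) mod n) = None} = {}"
    using assms by (auto simp: frees_def)
  show ?thesis unfolding qstep_unf Let_def D by (simp only: simp_thms if_True lessThan_iff)
qed

lemma qstep_some: assumes "j < n" "frees n T occ \<noteq> {}"
  shows "\<exists>q\<in>frees n T occ. (\<forall>r\<in>frees n T occ. off n j q \<le> off n j r) \<and>
     qstep n T (s, j) (occ, fv) = (occ(q := Some s), \<lambda>r. if r < n \<and> off n j r \<le> off n j q \<and> fv r = None then Some s else fv r)"
proof -
  define D where "D = {d. d < n \<and> (j + d) mod n \<in> T \<and> occ ((j + d) mod n) = None}"
  have np: "0 < n" using assms by simp
  obtain r0 where r0: "r0 \<in> frees n T occ" using assms by auto
  have r0n: "r0 < n" using r0 by (simp add: frees_def)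
  have inD: "\<And>r. r \<in> frees n T occ \<Longrightarrow> off n j r \<in> D"
  proof -
    fix r assume r: "r \<in> frees n T occ"
    hence rn: "r < n" by (simp add: frees_def)
    have "(j + off n j r) mod n = r" by (rule pos_off[OF assms(1) rn])
    thus "off n j r \<in> D" using r off_lt[OF assms(1)] unfolding D_def frees_def by auto
  qed
  have ne: "D \<noteq> {}" using inD[OF r0] by auto
  have fin: "finite D" unfolding D_def by auto
  define dm where "dm = Min D"
  have dmD: "dm \<in> D" unfolding dm_def by (rule Min_in[OF fin ne])
  define q where "q = (j + dm) mod n"
  have dmn: "dm < n" using dmD by (simp add: D_def)
  have oq: "off n j q = dm" unfolding q_def by (rule off_pos[OF assms(1) dmn])
  have qF: "q \<in> frees n T occ" using dmD np unfolding D_def frees_def q_def by auto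
  have qmin: "\<forall>r\<in>frees n T occ. off n j q \<le> off n j r"
    using inD Min_le[OF fin] oq unfolding dm_def by auto
  have V: "(\<lambda>e. (j + e) mod n) ` {..dm} = {r. r < n \<and> off n j r \<le> dm}"
  proof (intro set_eqI iffI)
    fix r assume "r \<in> (\<lambda>e. (j + e) mod n) ` {..dm}"
    then obtain e where e: "e \<le> dm" "r = (j + e) mod n" by auto
    have "off n j r = e" using e off_pos[OF assms(1), of e] dmn by simp
    thus "r \<in> {r. r < n \<and> off n j r \<le> dm}" using e np by simp
  next
    fix r assume r: "r \<in> {r. r < n \<and> off n j r \<le> dm}"
    hence "r = (j + off n j r) mod n" using pos_off[OF assms(1)] by simp
    thus "r \<in> (\<lambda>e. (j + e) mod n) ` {..dm}" using r by auto
  qed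
  have st: "qstep n T (s, j) (occ, fv) = (occ(q := Some s), \<lambda>r. if r < n \<and> off n j r \<le> off n j q \<and> fv r = None then Some s else fv r)"
    unfolding qstep_unf Let_def D_def[symmetric] dm_def[symmetric] q_def[symmetric] V using ne oq by simp
  show ?thesis using qF qmin st by blast
qed

lemma first_unique: assumes "b < n" "q1 \<in> S" "q2 \<in> S" "S \<subseteq> {..<n}" "\<forall>r\<in>S. off n b q1 \<le> off n b r" "\<forall>r\<in>S. off n b q2 \<le> off n b r"
  shows "q1 = q2"
proof -
  have "off n b q1 = off n b q2" using assms by (meson le_antisym)
  thus ?thesis using off_inj[OF assms(1)] assms(2-4) by auto
qed

definition pl :: "nat \<Rightarrow> nat \<Rightarrow> enat list \<Rightarrow> (nat \<times> nat) list" where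
  "pl n i x = map (\<lambda>p. (psize i x p, p)) (sort_key (psize i x) [0..<n])"

lemma pl_len[simp]: "length (pl n i x) = n"
  by (simp add: pl_def)

lemma pl_snd: "k < n \<Longrightarrow> snd (pl n i x ! k) < n"
proof -
  assume k: "k < n"
  have "sort_key (psize i x) [0..<n] ! k \<in> set (sort_key (psize i x) [0..<n])" by (rule nth_mem) (simp add: k)
  hence "sort_key (psize i x) [0..<n] ! k \<in> set [0..<n]" by (simp only: set_sort)
  thus ?thesis using k by (simp add: pl_def)
qed

lemma pl_fst: "k < n \<Longrightarrow> fst (pl n i x ! k) = psize i x (snd (pl n i x ! k))"
  by (simp add: pl_def)

lemma pl_sorted: "k \<le> k' \<Longrightarrow> k' < n \<Longrightarrow> fst (pl n i x ! k) \<le> fst (pl n i x ! k')"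
proof -
  assume a: "k \<le> k'" "k' < n"
  have "sorted (map (psize i x) (sort_key (psize i x) [0..<n]))" by (rule sorted_sort_key)
  hence "map (psize i x) (sort_key (psize i x) [0..<n]) ! k \<le> map (psize i x) (sort_key (psize i x) [0..<n]) ! k'"
    using a by (intro sorted_nth_mono) auto
  thus ?thesis using a by (simp add: pl_def)
qed

lemma pl_mset: "mset (map fst (pl n i x)) = mset (map (psize i x) [0..<n])"
proof -
  have "map fst (pl n i x) = map (psize i x) (sort_key (psize i x) [0..<n])" by (simp add: pl_def)
  also have "mset \<dots> = image_mset (psize i x) (mset (sort_key (psize i x) [0..<n]))" by (rule mset_map)
  also have "\<dots> = mset (map (psize i x) [0..<n])" by (simp add: mset_map)
  finally show ?thesis .
qed

locale qrun =
  fixes n :: nat and T :: "nat set" and i :: nat and x :: "enat list"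
  assumes Tn: "T \<subseteq> {..<n}"
begin

abbreviation "L \<equiv> pl n i x"

definition st :: "nat \<Rightarrow> (nat \<Rightarrow> nat option) \<times> (nat \<Rightarrow> nat option)" where
  "st k = fold (qstep n T) (take k L) (\<lambda>_. None, \<lambda>_. None)"

abbreviation "occ k \<equiv> fst (st k)"
abbreviation "fv k \<equiv> snd (st k)"

lemma st0: "st 0 = (\<lambda>_. None, \<lambda>_. None)" by (simp add: st_def)

lemma st_Suc: "k < n \<Longrightarrow> st (Suc k) = qstep n T (L ! k) (st k)"
  unfolding st_def by (simp add: take_Suc_conv_app_nth)

lemma st_n: "st n = queue_run n T i x"
  unfolding st_def queue_run_def pl_def by simp

lemma finT: "finite T" using Tn finite_subset by blast

lemma st_Suc': "k < n \<Longrightarrow> st (Suc k) = qstep n T (fst (L ! k), snd (L ! k)) (occ k, fv k)"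
  using st_Suc by simp

lemma step_cases: assumes k: "k < n"
  shows "(frees n T (occ k) = {} \<and> occ (Suc k) = occ k \<and>
           fv (Suc k) = (\<lambda>q. if q < n \<and> fv k q = None then Some (fst (L!k)) else fv k q)) \<or>
         (\<exists>q\<in>frees n T (occ k). (\<forall>r\<in>frees n T (occ k). off n (snd (L!k)) q \<le> off n (snd (L!k)) r) \<and>
            occ (Suc k) = (occ k)(q := Some (fst (L!k))) \<and>
            fv (Suc k) = (\<lambda>r. if r < n \<and> off n (snd (L!k)) r \<le> off n (snd (L!k)) q \<and> fv k r = None then Some (fst (L!k)) else fv k r))"
proof -
  have jn: "snd (L!k) < n" using pl_snd[OF k, of i x] by simp
  show ?thesis
  proof (cases "frees n T (occ k) = {}")
    case True
    have "st (Suc k) = (occ k, \<lambda>q. if q < n \<and> fv k q = None then Some (fst (L!k)) else fv k q)"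
      unfolding st_Suc'[OF k] by (rule qstep_none[OF jn True])
    thus ?thesis using True by simp
  next
    case False
    obtain q where q: "q\<in>frees n T (occ k)" "\<forall>r\<in>frees n T (occ k). off n (snd (L!k)) q \<le> off n (snd (L!k)) r"
      "qstep n T (fst (L!k), snd (L!k)) (occ k, fv k) = ((occ k)(q := Some (fst (L!k))), \<lambda>r. if r < n \<and> off n (snd (L!k)) r \<le> off n (snd (L!k)) q \<and> fv k r = None then Some (fst (L!k)) else fv k r)"
      using qstep_some[OF jn False] by blast
    have "st (Suc k) = ((occ k)(q := Some (fst (L!k))), \<lambda>r. if r < n \<and> off n (snd (L!k)) r \<le> off n (snd (L!k)) q \<and> fv k r = None then Some (fst (L!k)) else fv k r)"
      unfolding st_Suc'[OF k] by (rule q(3))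
    thus ?thesis using q(1,2) by auto
  qed
qed

end


lemma down_closed_card: assumes "finite S" "\<And>k k'. k' \<in> S \<Longrightarrow> k \<le> k' \<Longrightarrow> k \<in> S"
  shows "S = {..<card S}"
proof -
  have sub: "S \<subseteq> {..<card S}"
  proof
    fix k assume k: "k \<in> S"
    have "{..k} \<subseteq> S" using assms(2) k by auto
    hence "card {..k} \<le> card S" by (rule card_mono[OF assms(1)])
    thus "k \<in> {..<card S}" by simp
  qed
  show ?thesis by (rule card_subset_eq[OF _ sub]) simp_all
qed

context qrun begin

lemma step_cases2: assumes k: "k < n"
  obtains (none) "frees n T (occ k) = {}" "occ (Suc k) = occ k"
     "fv (Suc k) = (\<lambda>q. if q < n \<and> fv k q = None then Some (fst (L!k)) else fv k q)"
  | (some) q0 where "q0 \<in> frees n T (occ k)" "\<forall>r\<in>frees n T (occ k). off n (snd (L!k)) q0 \<le> off n (snd (L!k)) r"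
     "occ (Suc k) = (occ k)(q0 := Some (fst (L!k)))"
     "fv (Suc k) = (\<lambda>r. if r < n \<and> off n (snd (L!k)) r \<le> off n (snd (L!k)) q0 \<and> fv k r = None then Some (fst (L!k)) else fv k r)"
  using step_cases[OF k] by blast

lemma occ_T: "k \<le> n \<Longrightarrow> occ k q \<noteq> None \<Longrightarrow> q \<in> T"
proof (induction k)
  case 0 thus ?case by (simp add: st0)
next
  case (Suc k)
  have k: "k < n" using Suc by simp
  show ?case
  using k proof (cases rule: step_cases2)
    case none thus ?thesis using Suc by simp
  next
    case (some q0)
    thus ?thesis using Suc by (cases "q = q0") (auto simp: frees_def)
  qed
qed

lemma filled_sub: "k \<le> n \<Longrightarrow> {q. occ k q \<noteq> None} \<subseteq> T"
  using occ_T by auto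

lemma filled_fin: "k \<le> n \<Longrightarrow> finite {q. occ k q \<noteq> None}"
  using filled_sub finT finite_subset by blast

lemma card_filled: "k \<le> n \<Longrightarrow> card {q. occ k q \<noteq> None} = min k (card T)"
proof (induction k)
  case 0 thus ?case by (simp add: st0)
next
  case (Suc k)
  have k: "k < n" using Suc by simp
  have IH: "card {q. occ k q \<noteq> None} = min k (card T)" using Suc by simp
  show ?case
  using k proof (cases rule: step_cases2)
    case none
    note a = none
    have "T \<subseteq> {q. occ k q \<noteq> None}" using a Tn by (auto simp: frees_def)
    hence "{q. occ k q \<noteq> None} = T" by (rule equalityI[OF filled_sub[OF less_imp_le[OF k]]])
    hence "card {q. occ k q \<noteq> None} = card T" by simp
    thus ?thesis using a IH by simp
  next
    case (some q0)
    note q0 = some(1,3)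
    have e: "{q. occ (Suc k) q \<noteq> None} = insert q0 {q. occ k q \<noteq> None}" using q0 by auto
    have nin: "q0 \<notin> {q. occ k q \<noteq> None}" using q0 by (simp add: frees_def)
    have c1: "card {q. occ (Suc k) q \<noteq> None} = Suc (card {q. occ k q \<noteq> None})"
      unfolding e using nin filled_fin[of k] k by simp
    have sub: "{q. occ k q \<noteq> None} \<subseteq> T" by (rule filled_sub) (use k in simp)
    have "q0 \<in> T - {q. occ k q \<noteq> None}" using q0 by (auto simp: frees_def)
    hence "{q. occ k q \<noteq> None} \<subset> T" using sub by blast
    hence "card {q. occ k q \<noteq> None} < card T" by (rule psubset_card_mono[OF finT])
    thus ?thesis using c1 IH by simp
  qed
qed

lemma place_lt: assumes k: "k < n" "frees n T (occ k) \<noteq> {}" shows "k < card T"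
proof -
  obtain q where q: "q \<in> frees n T (occ k)" using assms by auto
  have sub: "{q. occ k q \<noteq> None} \<subseteq> T" by (rule filled_sub) (use k in simp)
  have "q \<in> T - {q. occ k q \<noteq> None}" using q by (auto simp: frees_def)
  hence "{q. occ k q \<noteq> None} \<subset> T" using sub by blast
  hence "card {q. occ k q \<noteq> None} < card T" by (rule psubset_card_mono[OF finT])
  thus ?thesis using card_filled[of k] k by simp
qed

lemma all_filled: "occ n q \<noteq> None \<longleftrightarrow> q \<in> T"
proof -
  have cT: "card T \<le> n" using card_mono[OF _ Tn] by simp
  have "card {q. occ n q \<noteq> None} = card T" using card_filled[of n] cT by simp
  hence "{q. occ n q \<noteq> None} = T" using filled_sub[of n] finT by (simp add: card_subset_eq)
  thus ?thesis by auto
qed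

lemma occ_mono1: "k < n \<Longrightarrow> occ k q = Some a \<Longrightarrow> occ (Suc k) q = Some a"
proof -
  assume k: "k < n" and a: "occ k q = Some a"
  show ?thesis
  using k proof (cases rule: step_cases2)
    case none thus ?thesis using a by simp
  next
    case (some q0) thus ?thesis using a by (auto simp: frees_def)
  qed
qed

lemma fv_mono1: "k < n \<Longrightarrow> fv k q = Some a \<Longrightarrow> fv (Suc k) q = Some a"
proof -
  assume k: "k < n" and a: "fv k q = Some a"
  show ?thesis
  using k proof (cases rule: step_cases2)
    case none thus ?thesis using a by simp
  next
    case (some q0) thus ?thesis using a by simp
  qed
qed

lemma occ_mono: "k \<le> k' \<Longrightarrow> k' \<le> n \<Longrightarrow> occ k q = Some a \<Longrightarrow> occ k' q = Some a"
proof (induction k' rule: dec_induct)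
  case base thus ?case by simp
next
  case (step m) thus ?case using occ_mono1 by simp
qed

lemma fv_mono: "k \<le> k' \<Longrightarrow> k' \<le> n \<Longrightarrow> fv k q = Some a \<Longrightarrow> fv k' q = Some a"
proof (induction k' rule: dec_induct)
  case base thus ?case by simp
next
  case (step m) thus ?case using fv_mono1 by simp
qed

lemma occ_vals: "k \<le> n \<Longrightarrow> occ k q = Some a \<Longrightarrow> \<exists>k0<k. k0 < card T \<and> a = fst (L!k0)"
proof (induction k)
  case 0 thus ?case by (simp add: st0)
next
  case (Suc k)
  have k: "k < n" using Suc by simp
  show ?case
  using k proof (cases rule: step_cases2)
    case none
    thus ?thesis using Suc by (metis Suc_leD less_SucI)
  next
    case (some q0)
    note q0 = some(1,3)
    have kT: "k < card T" using place_lt[OF k] q0(1) by auto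
    show ?thesis
    proof (cases "q = q0")
      case True thus ?thesis using q0 Suc.prems kT by auto
    next
      case False thus ?thesis using q0 Suc by (metis Suc_leD fun_upd_other less_SucI)
    qed
  qed
qed

lemma fv_vals: "k \<le> n \<Longrightarrow> fv k q = Some a \<Longrightarrow> \<exists>k0<k. a = fst (L!k0)"
proof (induction k)
  case 0 thus ?case by (simp add: st0)
next
  case (Suc k)
  have k: "k < n" using Suc by simp
  show ?case
  using k proof (cases rule: step_cases2)
    case none
    note h = none(3)
    show ?thesis
    proof (cases "fv k q = None")
      case True thus ?thesis using h Suc.prems by (auto split: if_splits)
    next
      case False thus ?thesis using h Suc by (auto split: if_splits) (metis less_SucI)
    qed
  next
    case (some q0)
    note h = some(4)
    show ?thesis
    proof (cases "fv k q = None")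
      case True thus ?thesis using h Suc.prems by (auto split: if_splits)
    next
      case False thus ?thesis using h Suc by (auto split: if_splits) (metis less_SucI)
    qed
  qed
qed

lemma fv_all: assumes "card T < n" "q < n" shows "fv n q \<noteq> None"
proof -
  define k where "k = card T"
  have k: "k < n" using assms k_def by simp
  have "card {q. occ k q \<noteq> None} = card T" using card_filled[of k] k k_def by simp
  hence e: "{q. occ k q \<noteq> None} = T" using filled_sub[of k] k finT by (simp add: card_subset_eq)
  have fr: "frees n T (occ k) = {}" using e by (auto simp: frees_def)
  have "fv (Suc k) q \<noteq> None"
  using k proof (cases rule: step_cases2)
    case none thus ?thesis using assms(2) by auto
  next
    case (some q0) thus ?thesis using fr by simp
  qed
  then obtain a where "fv (Suc k) q = Some a" by auto
  hence "fv n q = Some a" using fv_mono[of "Suc k" n q a] k by simp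
  thus ?thesis by simp
qed

end


lemma off_split: assumes "b < n" "h < n" "q < n" "off n b h < off n b q"
  shows "off n b q = off n b h + off n h q"
proof -
  have q: "q = (h + off n h q) mod n" using pos_off[OF assms(2,3)] by simp
  have e: "off n b q = (off n b h + off n h q) mod n" by (subst q) (rule off_add_mod[OF assms(1)])
  have l1: "off n h q < n" by (rule off_lt[OF assms(2)])
  have l2: "off n b h < n" by (rule off_lt[OF assms(1)])
  show ?thesis
  proof (cases "off n b h + off n h q < n")
    case True thus ?thesis using e by simp
  next
    case False
    hence "(off n b h + off n h q) mod n = off n b h + off n h q - n" using l1 l2
      by (simp add: le_mod_geq less_diff_conv2 mod_if)
    hence "off n b q < off n b h" using e l1 False by simp
    thus ?thesis using assms(4) by simp
  qed
qed

lemma CL: assumes p: "p < n" and j: "j0 < n" and F: "F \<subseteq> {..<n}" and h: "h \<in> F"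
  and hp: "\<forall>q\<in>F. off n p h \<le> off n p q" and hj: "\<forall>q\<in>F. off n j0 h \<le> off n j0 q"
  and q1: "q1 \<in> F - {h}" "\<forall>q\<in>F - {h}. off n p q1 \<le> off n p q"
  and q2: "q2 \<in> F - {h}" "\<forall>q\<in>F - {h}. off n j0 q2 \<le> off n j0 q"
  shows "q1 = q2"
proof -
  have hn: "h < n" using h F by auto
  have gt: "\<And>b q. b < n \<Longrightarrow> q \<in> F - {h} \<Longrightarrow> off n b h \<le> off n b q \<Longrightarrow> off n b h < off n b q"
  proof -
    fix b q assume a: "b < n" "q \<in> F - {h}" "off n b h \<le> off n b q"
    have qn: "q < n" using a F by auto
    have "off n b h \<noteq> off n b q" using off_inj[OF a(1) hn qn] a(2) by auto
    thus "off n b h < off n b q" using a(3) by simp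
  qed
  have sp: "\<And>b q. b < n \<Longrightarrow> q \<in> F - {h} \<Longrightarrow> off n b h \<le> off n b q \<Longrightarrow> off n b q = off n b h + off n h q"
    using gt off_split hn F by blast
  have a1: "off n p q1 = off n p h + off n h q1" using sp[OF p q1(1)] hp q1 by auto
  have a2: "off n p q2 = off n p h + off n h q2" using sp[OF p q2(1)] hp q2 by auto
  have b1: "off n j0 q1 = off n j0 h + off n h q1" using sp[OF j q1(1)] hj q1 by auto
  have b2: "off n j0 q2 = off n j0 h + off n h q2" using sp[OF j q2(1)] hj q2 by auto
  have "off n p q1 \<le> off n p q2" using q1(2) q2(1) by blast
  hence "off n h q1 \<le> off n h q2" using a1 a2 by linarith
  moreover have "off n j0 q2 \<le> off n j0 q1" using q2(2) q1(1) by blast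
  hence "off n h q2 \<le> off n h q1" using b1 b2 by linarith
  ultimately have "off n h q1 = off n h q2" by simp
  moreover have "q1 < n" "q2 < n" using q1 q2 F by auto
  ultimately show ?thesis using off_inj[OF hn] by blast
qed

lemma CL_region: assumes p: "p < n" and j: "j0 < n" and hn: "h < n" "h' < n" "r < n"
  and a: "off n p h < off n p r" "off n p r \<le> off n p h'" "off n j0 h < off n j0 h'"
  shows "off n j0 h < off n j0 r \<and> off n j0 r \<le> off n j0 h'"
proof -
  have hh': "off n p h < off n p h'" using a by simp
  have e1: "off n p r = off n p h + off n h r" by (rule off_split[OF p hn(1) hn(3) a(1)])
  have e2: "off n p h' = off n p h + off n h h'" by (rule off_split[OF p hn(1) hn(2) hh'])
  have e3: "off n j0 h' = off n j0 h + off n h h'" by (rule off_split[OF j hn(1) hn(2) a(3)])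
  have le: "off n h r \<le> off n h h'" using e1 e2 a(2) by simp
  have rpos: "0 < off n h r" using e1 a(1) by simp
  have rr: "r = (h + off n h r) mod n" using pos_off[OF hn(1) hn(3)] by simp
  have "off n j0 r = (off n j0 h + off n h r) mod n" by (subst rr) (rule off_add_mod[OF j])
  moreover have "off n j0 h + off n h r < n" using le e3 off_lt[OF j, of h'] by simp
  ultimately have "off n j0 r = off n j0 h + off n h r" by simp
  thus ?thesis using le rpos e3 by simp
qed

definition enc :: "nat \<Rightarrow> nat \<Rightarrow> nat set \<Rightarrow> (nat \<Rightarrow> nat option) \<Rightarrow> enat list" where
  "enc n B S oc = map (\<lambda>q. if q \<in> S then (case oc q of Some a \<Rightarrow> enat a | None \<Rightarrow> enat B) else \<infinity>) [0..<n]"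

lemma enc_len[simp]: "length (enc n B S oc) = n" by (simp add: enc_def)

lemma enc_nth: "q < n \<Longrightarrow> enc n B S oc ! q = (if q \<in> S then (case oc q of Some a \<Rightarrow> enat a | None \<Rightarrow> enat B) else \<infinity>)"
  by (simp add: enc_def)

lemma enc_upd: "q0 \<in> S \<Longrightarrow> q0 < n \<Longrightarrow> enc n B S (oc(q0 := Some a)) = (enc n B S oc)[q0 := enat a]"
  by (intro nth_equalityI) (auto simp: enc_nth nth_list_update)

lemma psize_le: "p < length x \<Longrightarrow> (x!p \<noteq> \<infinity> \<Longrightarrow> x!p < enat i) \<Longrightarrow> psize i x p \<le> i"
  by (cases "x!p") (auto simp: psize_def)

lemma ex_argmin: fixes f :: "'a \<Rightarrow> nat" assumes "finite S" "S \<noteq> {}" shows "\<exists>h\<in>S. \<forall>q\<in>S. f h \<le> f q"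
proof -
  have "Min (f ` S) \<in> f ` S" using assms by simp
  then obtain h where h: "h \<in> S" "f h = Min (f ` S)" by auto
  have "\<forall>q\<in>S. f h \<le> f q" using h assms by simp
  thus ?thesis using h by blast
qed

context jctx begin
lemma jump_top: assumes "x!j0 \<noteq> \<infinity>" "\<And>q. q < n \<Longrightarrow> x!q \<noteq> \<infinity> \<Longrightarrow> x!q \<le> x!j0"
  shows "jump x j0 = x[j0 := \<infinity>]"
proof (rule nth_equalityI)
  show "length (jump x j0) = length (x[j0 := \<infinity>])" by simp
  fix q assume "q < length (jump x j0)"
  hence q: "q < n" by simp
  show "jump x j0 ! q = x[j0 := \<infinity>] ! q"
  proof (cases "q = j0")
    case True thus ?thesis using jump_cf[OF assms(1)] q by (simp add: cfv_def)
  next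
    case False
    have "off n j0 j0 < off n j0 q" using off_zero_iff[OF j0n q] False j0n by simp
    hence "x!j0 \<le> pmx x j0 q" using pm_ge[of j0 x j0 q] j0n assms(1) by simp
    hence "cfv x j0 q = x!q" unfolding cfv_def using False assms(2)[OF q] by (auto dest: order.trans simp: not_less)
    thus ?thesis using jump_cf[OF assms(1)] q False by simp
  qed
qed
end

context sctx begin
lemma S0: assumes "F = {}" "q < n" shows "jump x j0 ! q \<noteq> enat BIG"
proof -
  have jq: "jump x j0 ! q = cfv x j0 q" by (rule jcf[OF assms(2)])
  show ?thesis
  proof (cases "q = j0")
    case True thus ?thesis using jq by (simp add: cfv_def)
  next
    case False
    have pm: "pmx x j0 q \<le> enat s" by (rule pm_le_s) (use assms False in auto)
    hence pm2: "pmx x j0 q \<noteq> enat BIG" using sB by (auto dest: order.trans)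
    have "x!q \<noteq> enat BIG" using assms by (auto simp: F_def)
    thus ?thesis using jq pm2 by (simp add: cfv_def)
  qed
qed
end

locale qcmp =
  fixes n :: nat and T :: "nat set" and i :: nat and x :: "enat list" and j0 :: nat
  assumes Tn: "T \<subseteq> {..<n}" and j0T: "j0 \<in> T" and xlen: "length x = n"
  and xfin: "\<And>p. p < n \<Longrightarrow> x!p \<noteq> \<infinity> \<Longrightarrow> x!p < enat i"
begin

sublocale A: qrun n T i x by unfold_locales (rule Tn)
sublocale B: qrun n "T - {j0}" i x by unfold_locales (use Tn in auto)

abbreviation "L \<equiv> pl n i x"
abbreviation "BIG \<equiv> Suc i"
abbreviation "zA k \<equiv> enc n BIG T (A.occ k)"
abbreviation "zB k \<equiv> enc n BIG (T - {j0}) (B.occ k)"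

lemma j0n: "j0 < n" using j0T Tn by auto

lemma size_le: "k < n \<Longrightarrow> fst (L!k) \<le> i"
  using pl_fst[of k n i x] pl_snd[of k n i x] psize_le[of _ x i] xfin xlen by simp

lemma valsA: assumes "k \<le> n" "k' < n" "k \<le> k'" "A.occ k q = Some a" shows "a \<le> fst (L!k')"
proof -
  obtain k0 where "k0 < k" "a = fst (L!k0)" using A.occ_vals[OF assms(1,4)] by blast
  thus ?thesis using pl_sorted[of k0 k' n i x] assms by simp
qed

lemma sctxA: assumes k: "k < n" shows "sctx (zA k) j0 (fst (L!k)) BIG"
proof
  show "j0 < length (zA k)" using j0n by simp
  show "zA k ! j0 \<noteq> \<infinity>" using j0n j0T by (simp add: enc_nth split: option.split)
  show "fst (L!k) < BIG" using size_le[OF k] by simp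
  fix q assume q: "q < length (zA k)" "zA k ! q \<noteq> \<infinity>"
  show "zA k ! q \<le> enat (fst (L!k)) \<or> zA k ! q = enat BIG"
    using q valsA[OF less_imp_le[OF k] k le_refl] by (auto simp: enc_nth split: option.splits if_splits)
qed

lemma F_eqA: "k < n \<Longrightarrow> sctx.F (zA k) BIG = frees n T (A.occ k)"
proof -
  assume k: "k < n"
  interpret z: sctx "zA k" j0 "fst (L!k)" BIG by (rule sctxA[OF k])
  show ?thesis
  proof (intro set_eqI iffI)
    fix q assume "q \<in> z.F"
    thus "q \<in> frees n T (A.occ k)"
      using valsA[OF less_imp_le[OF k] k le_refl, of q] size_le[OF k]
      by (auto simp: z.F_def frees_def enc_nth split: if_splits option.splits)
  next
    fix q assume "q \<in> frees n T (A.occ k)"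
    thus "q \<in> z.F" by (auto simp: z.F_def frees_def enc_nth)
  qed
qed

lemma BvalsB: assumes "k \<le> n" "B.occ k q = Some a" shows "a \<le> i"
proof -
  obtain k0 where "k0 < k" "a = fst (L!k0)" using B.occ_vals[OF assms] by blast
  thus ?thesis using size_le[of k0] assms by simp
qed

lemma frees_B_char: assumes "q < n" "k \<le> n" shows "q \<in> frees n (T - {j0}) (B.occ k) \<longleftrightarrow> zB k ! q = enat BIG"
  using assms BvalsB[OF assms(2), of q] by (auto simp: frees_def enc_nth split: option.splits)

lemma zA0: "zA 0 = map (\<lambda>q. if q \<in> T then enat BIG else \<infinity>) [0..<n]"
  by (intro nth_equalityI) (auto simp: enc_nth A.st0)

lemma zB0: "zB 0 = map (\<lambda>q. if q \<in> T - {j0} then enat BIG else \<infinity>) [0..<n]"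
  by (intro nth_equalityI) (auto simp: enc_nth B.st0)

lemma I1: "k \<le> n \<Longrightarrow> zB k = jump (zA k) j0"
proof (induction k)
  case 0
  interpret z: jctx "zA 0" j0 by unfold_locales (simp add: j0n)
  have "jump (zA 0) j0 = (zA 0)[j0 := \<infinity>]"
    by (rule z.jump_top) (use j0n j0T in \<open>auto simp: zA0 split: if_splits\<close>)
  thus ?case unfolding zA0 zB0 using j0T j0n by (intro nth_equalityI) (auto simp: nth_list_update)
next
  case (Suc k)
  have k: "k < n" using Suc by simp
  have IH: "zB k = jump (zA k) j0" using Suc by simp
  define s where "s = fst (L!k)"
  define p where "p = snd (L!k)"
  have pn: "p < n" unfolding p_def by (rule pl_snd[OF k])
  interpret z: sctx "zA k" j0 s BIG unfolding s_def by (rule sctxA[OF k])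
  have Fe: "z.F = frees n T (A.occ k)" unfolding s_def by (rule F_eqA[OF k])
  have Fn: "z.F \<subseteq> {..<n}" by (auto simp: z.F_def)
  have finF: "finite z.F" using Fn finite_subset by blast
  have FB: "\<And>q. q < n \<Longrightarrow> q \<in> frees n (T - {j0}) (B.occ k) \<longleftrightarrow> jump (zA k) j0 ! q = enat BIG"
    using frees_B_char[of _ k] k IH by simp
  have FBn: "frees n (T - {j0}) (B.occ k) \<subseteq> {..<n}" by (auto simp: frees_def)
  show ?case
  using k proof (cases rule: A.step_cases2)
    case none
    have fe: "frees n (T - {j0}) (B.occ k) = {}"
      using FB z.S0[of] none(1) Fe FBn by auto
    have "B.occ (Suc k) = B.occ k"
    using k proof (cases rule: B.step_cases2)
      case none thus ?thesis by simp
    next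
      case (some qB) thus ?thesis using fe by simp
    qed
    thus ?thesis using none IH by simp
  next
    case (some qA)
    have qAT: "qA \<in> T" "qA < n" using some(1) by (auto simp: frees_def)
    have zA': "zA (Suc k) = (zA k)[qA := enat s]" using some(3) enc_upd[OF qAT] s_def by simp
    have Fne: "z.F \<noteq> {}" using some(1) Fe by auto
    obtain h where h: "h \<in> z.F" "\<forall>q\<in>z.F. off n j0 h \<le> off n j0 q" using ex_argmin[OF finF Fne] by blast
    have hmin: "\<And>q. q \<in> z.F \<Longrightarrow> off (length (zA k)) j0 h \<le> off (length (zA k)) j0 q" using h by simp
    have FBe: "frees n (T - {j0}) (B.occ k) = z.F - {h}"
    proof (intro set_eqI iffI)
      fix q assume q: "q \<in> frees n (T - {j0}) (B.occ k)"
      hence qn: "q < n" by (auto simp: frees_def)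
      thus "q \<in> z.F - {h}" using FB[OF qn] q z.S1[OF h(1) hmin, of q] by simp
    next
      fix q assume q: "q \<in> z.F - {h}"
      hence qn: "q < n" using Fn by auto
      thus "q \<in> frees n (T - {j0}) (B.occ k)" using FB[OF qn] q z.S1[OF h(1) hmin, of q] by simp
    qed
    have qAmin: "\<forall>r\<in>z.F. off n p qA \<le> off n p r" using some(2) Fe p_def by simp
    have qAF: "qA \<in> z.F" using some(1) Fe by simp
    show ?thesis
    proof (cases "qA = h")
      case False
      have qAB: "qA \<in> frees n (T - {j0}) (B.occ k)" using FBe qAF False by simp
      have "zB (Suc k) = (zB k)[qA := enat s]"
      using k proof (cases rule: B.step_cases2)
        case none thus ?thesis using qAB by simp
      next
        case (some qB)
        have "qB = qA"
          by (rule first_unique[OF pn some(1) qAB FBn]) (use some(2) qAmin FBe p_def in auto)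
        moreover have "qB \<in> T - {j0}" "qB < n" using some(1) by (auto simp: frees_def)
        ultimately show ?thesis using some(3) enc_upd s_def by simp
      qed
      also have "\<dots> = jump ((zA k)[qA := enat s]) j0"
        using IH z.S3a[OF h(1) hmin qAF False] by simp
      finally show ?thesis using zA' by simp
    next
      case True
      show ?thesis
      proof (cases "z.F - {h} = {}")
        case emp: True
        have F1: "z.F = {h}" using emp h(1) by auto
        have "B.occ (Suc k) = B.occ k"
          using k proof (cases rule: B.step_cases2)
          case none thus ?thesis by simp
        next
          case (some qB) thus ?thesis using FBe emp by simp
        qed
        hence "zB (Suc k) = zB k" by simp
        also have "\<dots> = jump ((zA k)[h := enat s]) j0"
          using IH z.S3bc[OF h(1) hmin, of h] F1 by simp
        finally show ?thesis using zA' True by simp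
      next
        case ne: False
        have finG: "finite (z.F - {h})" using finF by simp
        obtain h' where h': "h' \<in> z.F - {h}" "\<forall>q\<in>z.F - {h}. off n j0 h' \<le> off n j0 q"
          using ex_argmin[OF finG ne] by blast
        have "zB (Suc k) = (zB k)[h' := enat s]"
        using k proof (cases rule: B.step_cases2)
          case none thus ?thesis using FBe ne by simp
        next
          case (some qB)
          have "qB = h'"
            by (rule CL[OF pn j0n Fn h(1) _ h(2)]) (use some(1,2) FBe qAmin True h' p_def in auto)
          moreover have "qB \<in> T - {j0}" "qB < n" using some(1) by (auto simp: frees_def)
          ultimately show ?thesis using some(3) enc_upd s_def by simp
        qed
        also have "\<dots> = jump ((zA k)[h := enat s]) j0"
          using IH z.S3bc[OF h(1) hmin, of h'] h' ne by auto
        finally show ?thesis using zA' True by simp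
      qed
    qed
  qed
qed

lemma FB_empty: assumes k: "k < n" "frees n T (A.occ k) = {}" shows "frees n (T - {j0}) (B.occ k) = {}"
proof -
  interpret z: sctx "zA k" j0 "fst (L!k)" BIG by (rule sctxA[OF k(1)])
  have Fe: "z.F = {}" using F_eqA[OF k(1)] k(2) by simp
  show ?thesis
  proof (rule ccontr)
    assume "frees n (T - {j0}) (B.occ k) \<noteq> {}"
    then obtain q where q: "q \<in> frees n (T - {j0}) (B.occ k)" by auto
    hence qn: "q < n" by (simp add: frees_def)
    have "zB k ! q = enat BIG" using frees_B_char[OF qn, of k] q k by simp
    thus False using z.S0[OF Fe, of q] I1[of k] k qn by simp
  qed
qed

lemma FB_rel: assumes k: "k < n" and h: "h \<in> frees n T (A.occ k)" "\<forall>q\<in>frees n T (A.occ k). off n j0 h \<le> off n j0 q"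
  shows "frees n (T - {j0}) (B.occ k) = frees n T (A.occ k) - {h}"
proof -
  interpret z: sctx "zA k" j0 "fst (L!k)" BIG by (rule sctxA[OF k(1)])
  have Fe: "z.F = frees n T (A.occ k)" by (rule F_eqA[OF k(1)])
  have hF: "h \<in> z.F" using h Fe by simp
  have hmin: "\<And>q. q \<in> z.F \<Longrightarrow> off (length (zA k)) j0 h \<le> off (length (zA k)) j0 q" using h Fe by simp
  show ?thesis
  proof (intro set_eqI iffI)
    fix q assume q: "q \<in> frees n (T - {j0}) (B.occ k)"
    hence qn: "q < n" by (auto simp: frees_def)
    have "jump (zA k) j0 ! q = enat BIG" using frees_B_char[OF qn, of k] q k I1[of k] by simp
    thus "q \<in> frees n T (A.occ k) - {h}" using z.S1[OF hF hmin, of q] qn Fe by simp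
  next
    fix q assume q: "q \<in> frees n T (A.occ k) - {h}"
    hence qn: "q < n" by (auto simp: frees_def)
    have "jump (zA k) j0 ! q = enat BIG" using z.S1[OF hF hmin, of q] qn Fe q by simp
    thus "q \<in> frees n (T - {j0}) (B.occ k)" using frees_B_char[OF qn, of k] k I1[of k] by simp
  qed
qed

lemma FB_sub: "k < n \<Longrightarrow> frees n (T - {j0}) (B.occ k) \<subseteq> frees n T (A.occ k)"
proof -
  assume k: "k < n"
  show ?thesis
  proof (cases "frees n T (A.occ k) = {}")
    case True thus ?thesis using FB_empty[OF k] by simp
  next
    case False
    have fin: "finite (frees n T (A.occ k))" by (auto simp: frees_def)
    obtain h where "h \<in> frees n T (A.occ k)" "\<forall>q\<in>frees n T (A.occ k). off n j0 h \<le> off n j0 q"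
      using ex_argmin[OF fin False] by blast
    thus ?thesis using FB_rel[OF k] by auto
  qed
qed

lemma queue_out_enc: "queue_out n S i x = enc n b S (qrun.occ n S i x n)" if "S \<subseteq> {..<n}"
proof -
  interpret R: qrun n S i x by unfold_locales (rule that)
  have af: "\<And>q. q \<in> S \<Longrightarrow> R.occ n q \<noteq> None" using R.all_filled by blast
  show ?thesis unfolding queue_out_def R.st_n[symmetric]
    by (intro nth_equalityI) (auto simp: enc_nth dest: af split: option.splits)
qed

theorem L1: "queue_out n (T - {j0}) i x = jump (queue_out n T i x) j0"
  using I1[of n] queue_out_enc[of T BIG] queue_out_enc[of "T - {j0}" BIG] Tn by auto

lemma off_between: assumes "j0 < j" "j < n" "r < n" "0 < off n j0 r" "off n j0 r \<le> off n j0 j"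
  shows "j0 < r \<and> r \<le> j"
proof -
  have oj: "off n j0 j = j - j0" using off_eq[OF j0n assms(2)] assms by simp
  show ?thesis
  proof (cases "j0 \<le> r")
    case True
    hence "off n j0 r = r - j0" using off_eq[OF j0n assms(3)] by simp
    thus ?thesis using assms oj True by simp
  next
    case False
    hence "off n j0 r = r + n - j0" using off_eq[OF j0n assms(3)] by simp
    thus ?thesis using assms oj False by simp
  qed
qed

context
  fixes j :: nat
  assumes jj: "j0 < j" "j < n" "\<forall>q. j0 < q \<and> q \<le> j \<longrightarrow> q \<in> T" "A.occ n j = Some i"
begin

lemma ext_i: assumes k: "k < n" and qA: "qA \<in> frees n T (A.occ k)" "\<forall>r\<in>frees n T (A.occ k). off n (snd (L!k)) qA \<le> off n (snd (L!k)) r"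
  and Bc: "frees n (T - {j0}) (B.occ k) = {} \<or> (qB \<in> frees n (T - {j0}) (B.occ k) \<and>
        (\<forall>r\<in>frees n (T - {j0}) (B.occ k). off n (snd (L!k)) qB \<le> off n (snd (L!k)) r) \<and> off n (snd (L!k)) r \<le> off n (snd (L!k)) qB)"
  and r: "r < n" "off n (snd (L!k)) qA < off n (snd (L!k)) r" "r \<notin> T"
  and Aocc: "A.occ (Suc k) = (A.occ k)(qA := Some (fst (L!k)))"
  shows "fst (L!k) = i"
proof (rule ccontr)
  assume ne: "fst (L!k) \<noteq> i"
  define s where "s = fst (L!k)"
  define p where "p = snd (L!k)"
  have pn: "p < n" unfolding p_def by (rule pl_snd[OF k])
  have si: "s < i" using size_le[OF k] ne s_def by simp
  define FA where "FA = frees n T (A.occ k)"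
  define FBs where "FBs = frees n (T - {j0}) (B.occ k)"
  have FAn: "FA \<subseteq> {..<n}" by (auto simp: FA_def frees_def)
  have finFA: "finite FA" using FAn finite_subset by blast
  have FAne: "FA \<noteq> {}" using qA FA_def by auto
  obtain h where h: "h \<in> FA" "\<forall>q\<in>FA. off n j0 h \<le> off n j0 q" using ex_argmin[OF finFA FAne] by blast
  have FBe: "FBs = FA - {h}" using FB_rel[OF k] h unfolding FA_def FBs_def by blast
  have jT: "j \<in> T" "j < n" using jj by auto
  have qAh: "qA = h"
  proof (rule ccontr)
    assume "qA \<noteq> h"
    hence qAB: "qA \<in> FBs" using FBe qA FA_def by auto
    hence "qB \<in> FBs \<and> off n p qB \<le> off n p qA \<and> off n p r \<le> off n p qB" using Bc FBs_def p_def by auto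
    thus False using r(2) p_def by simp
  qed
  have jfree: "A.occ k j = None"
  proof (rule ccontr)
    assume "A.occ k j \<noteq> None"
    then obtain a where a: "A.occ k j = Some a" by auto
    have "A.occ n j = Some a" using A.occ_mono[of k n j a] a k by simp
    hence "a = i" using jj by simp
    moreover have "a \<le> s" using valsA[of k k j a] a k s_def by simp
    ultimately show False using si by simp
  qed
  have jFA: "j \<in> FA" using jfree jT by (simp add: FA_def frees_def)
  have jh: "j \<noteq> h"
  proof
    assume "j = h"
    hence "A.occ (Suc k) j = Some s" using Aocc qAh s_def by simp
    hence "A.occ n j = Some s" using A.occ_mono[of "Suc k" n j s] k by simp
    thus False using jj si by simp
  qed
  have jFB: "j \<in> FBs" using jFA jh FBe by simp
  have Bsome: "qB \<in> FBs" "\<forall>r\<in>FBs. off n p qB \<le> off n p r" "off n p r \<le> off n p qB"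
    using Bc jFB unfolding FBs_def p_def by auto
  have finFB: "finite FBs" using finFA FBe by simp
  have FBne: "FBs \<noteq> {}" using jFB by auto
  obtain h' where h': "h' \<in> FBs" "\<forall>q\<in>FBs. off n j0 h' \<le> off n j0 q" using ex_argmin[OF finFB FBne] by blast
  have qBh': "qB = h'"
    by (rule CL[OF pn j0n FAn h(1) _ h(2)]) (use Bsome h' FBe qA qAh p_def FA_def in auto)
  have hn: "h < n" "qB < n" using h Bsome FAn FBe by auto
  have ohqB: "off n j0 h < off n j0 qB"
  proof -
    have "off n j0 h \<le> off n j0 qB" using h(2) Bsome(1) FBe by auto
    moreover have "off n j0 h \<noteq> off n j0 qB" using off_inj[OF j0n hn] Bsome(1) FBe by auto
    ultimately show ?thesis by simp
  qed
  have reg: "off n j0 h < off n j0 r \<and> off n j0 r \<le> off n j0 qB"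
    by (rule CL_region[OF pn j0n hn(1) hn(2) r(1)]) (use r(2) qAh Bsome(3) ohqB p_def in auto)
  have "off n j0 qB \<le> off n j0 j" using h'(2) jFB qBh' by auto
  hence "j0 < r \<and> r \<le> j" using off_between[OF jj(1) jj(2) r(1)] reg by simp
  thus False using jj(3) r(3) by auto
qed

definition INV :: "nat \<Rightarrow> bool" where
  "INV k \<longleftrightarrow> (\<forall>q<n. q \<notin> T \<longrightarrow> (B.fv k q = A.fv k q \<or> (A.fv k q = None \<and> B.fv k q = Some i))) \<and>
      B.fv k j0 = A.occ k j0"

lemma Jstep: assumes "fa' = (if vA \<and> fa = None then Some s else fa)"
  "fb' = (if vB \<and> fb = None then Some s else fb)"
  "fb = fa \<or> (fa = None \<and> fb = Some i)" "vA \<longrightarrow> vB" "vB \<and> \<not> vA \<longrightarrow> s = i"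
  "fb = Some i \<longrightarrow> s = i"
  shows "fb' = fa' \<or> (fa' = None \<and> fb' = Some i)"
  using assms by auto

lemma Bfv_i: assumes "k < n" "B.fv k q = Some i" shows "fst (L!k) = i"
proof -
  obtain k0 where "k0 < k" "i = fst (L!k0)" using B.fv_vals[of k q i] assms by auto
  hence "i \<le> fst (L!k)" using pl_sorted[of k0 k n i x] assms by simp
  thus ?thesis using size_le[OF assms(1)] by simp
qed

lemma INV_all: "k \<le> n \<Longrightarrow> INV k"
proof (induction k)
  case 0 thus ?case by (simp add: INV_def A.st0 B.st0)
next
  case (Suc k)
  have k: "k < n" using Suc by simp
  have IH: "INV k" using Suc by simp
  define s where "s = fst (L!k)"
  define p where "p = snd (L!k)"
  have pn: "p < n" unfolding p_def by (rule pl_snd[OF k])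
  define FA where "FA = frees n T (A.occ k)"
  define FBs where "FBs = frees n (T - {j0}) (B.occ k)"
  have FAn: "FA \<subseteq> {..<n}" by (auto simp: FA_def frees_def)
  have FBn: "FBs \<subseteq> {..<n}" by (auto simp: FBs_def frees_def)
  have FBsub: "FBs \<subseteq> FA" using FB_sub[OF k] FA_def FBs_def by simp
  have Ks: "B.fv (Suc k) j0 = A.occ (Suc k) j0"
  proof (cases "A.occ k j0")
    case (Some a)
    have "B.fv k j0 = Some a" using IH Some by (simp add: INV_def)
    thus ?thesis using B.fv_mono1[OF k] A.occ_mono1[OF k] Some by simp
  next
    case None
    have j0FA: "j0 \<in> FA" using None j0T j0n by (simp add: FA_def frees_def)
    have hmin: "\<forall>q\<in>FA. off n j0 j0 \<le> off n j0 q" using j0n by simp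
    have FBe: "FBs = FA - {j0}" using FB_rel[OF k] j0FA hmin FA_def FBs_def by simp
    have Bj0: "B.fv k j0 = None" using IH None by (simp add: INV_def)
    show ?thesis
    using k proof (cases rule: A.step_cases2)
      case none thus ?thesis using j0FA FA_def by simp
    next
      case (some qA)
      show ?thesis
      proof (cases "qA = j0")
        case True
        have "A.occ (Suc k) j0 = Some s" using some(3) True s_def by simp
        moreover have "B.fv (Suc k) j0 = Some s"
        using k proof (cases rule: B.step_cases2)
          case none thus ?thesis using Bj0 j0n s_def by simp
        next
          case (some qB)
          have "off n p qA \<le> off n p qB" using \<open>qA \<in> _\<close> some(1) FBsub FA_def FBs_def \<open>\<forall>r\<in>frees n T (A.occ k). _\<close> p_def by auto
          thus ?thesis using some(4) True Bj0 j0n s_def p_def by simp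
        qed
        ultimately show ?thesis by simp
      next
        case False
        have qAB: "qA \<in> FBs" using FBe some(1) False FA_def by simp
        have Aj0: "A.occ (Suc k) j0 = None" using some(3) False None by simp
        have lt: "off n p qA < off n p j0"
        proof -
          have "off n p qA \<le> off n p j0" using some(2) j0FA FA_def p_def by simp
          moreover have "off n p qA \<noteq> off n p j0" using off_inj[OF pn] False some(1) j0n by (auto simp: frees_def)
          ultimately show ?thesis by simp
        qed
        have "B.fv (Suc k) j0 = None"
        using k proof (cases rule: B.step_cases2)
          case none thus ?thesis using qAB FBs_def by simp
        next
          case (some qB)
          have "qB = qA"
            by (rule first_unique[OF pn some(1) qAB[unfolded FBs_def] FBn[unfolded FBs_def]])
               (use some(2) \<open>\<forall>r\<in>frees n T (A.occ k). _\<close> FBsub FA_def FBs_def p_def in auto)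
          thus ?thesis using some(4) lt Bj0 p_def by simp
        qed
        thus ?thesis using Aj0 by simp
      qed
    qed
  qed
  have Js: "\<forall>q<n. q \<notin> T \<longrightarrow> (B.fv (Suc k) q = A.fv (Suc k) q \<or> (A.fv (Suc k) q = None \<and> B.fv (Suc k) q = Some i))"
  proof (intro allI impI)
    fix q assume q: "q < n" "q \<notin> T"
    have Iq: "B.fv k q = A.fv k q \<or> (A.fv k q = None \<and> B.fv k q = Some i)" using IH q by (simp add: INV_def)
    have Ci: "B.fv k q = Some i \<longrightarrow> s = i" using Bfv_i[OF k] s_def by simp
    show "B.fv (Suc k) q = A.fv (Suc k) q \<or> (A.fv (Suc k) q = None \<and> B.fv (Suc k) q = Some i)"
    using k proof (cases rule: A.step_cases2)
      case Anone: none
      have fbe: "FBs = {}" using FB_empty[OF k] Anone(1) FBs_def by simp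
      have Bn: "B.fv (Suc k) = (\<lambda>q. if q < n \<and> B.fv k q = None then Some s else B.fv k q)"
        using k proof (cases rule: B.step_cases2)
        case none thus ?thesis unfolding s_def by simp
      next
        case (some qB) thus ?thesis using fbe FBs_def by simp
      qed
      show ?thesis by (rule Jstep[where vA = "q < n" and vB = "q < n" and s = s]) (use Ci q Iq Bn Anone(3) s_def in simp_all)
    next
      case Asome: (some qA)
      show ?thesis
      using k proof (cases rule: B.step_cases2)
        case Bnone: none
        have b: "(q < n) \<and> \<not>(q < n \<and> off n p q \<le> off n p qA) \<longrightarrow> s = i"
        proof
          assume a: "(q < n) \<and> \<not>(q < n \<and> off n p q \<le> off n p qA)"
          show "s = i" unfolding s_def
            by (rule ext_i[OF k Asome(1,2), of undefined q]) (use Bnone(1) a q Asome(3) p_def in auto)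
        qed
        show ?thesis by (rule Jstep[where vA = "q < n \<and> off n p q \<le> off n p qA" and vB = "q < n" and s = s])
          (use Ci q b Iq Asome(4) Bnone(3) s_def p_def in simp_all)
      next
        case Bsome: (some qB)
        have ab: "off n p qA \<le> off n p qB" using Asome(2) Bsome(1) FBsub FA_def FBs_def p_def by auto
        have b: "(q < n \<and> off n p q \<le> off n p qB) \<and> \<not>(q < n \<and> off n p q \<le> off n p qA) \<longrightarrow> s = i"
        proof
          assume a: "(q < n \<and> off n p q \<le> off n p qB) \<and> \<not>(q < n \<and> off n p q \<le> off n p qA)"
          show "s = i" unfolding s_def
            by (rule ext_i[OF k Asome(1,2), of qB q]) (use Bsome(1,2) a q Asome(3) p_def in auto)
        qed
        show ?thesis by (rule Jstep[where vA = "q < n \<and> off n p q \<le> off n p qA" and vB = "q < n \<and> off n p q \<le> off n p qB" and s = s])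
          (use Ci q b ab Iq Asome(4) Bsome(4) s_def p_def in simp_all)
      qed
    qed
  qed
  show ?case using Ks Js by (simp add: INV_def)
qed

theorem L2: "queue_wt t n (T - {j0}) i x = t (the (A.occ n j0)) * queue_wt t n T i x"
proof -
  have I: "INV n" by (rule INV_all) simp
  have e: "{..<n} - (T - {j0}) = insert j0 ({..<n} - T)" using j0T j0n by auto
  have wB: "queue_wt t n (T - {j0}) i x = (\<Prod>p\<in>{..<n} - (T - {j0}). t (the (B.fv n p)))"
    unfolding queue_wt_def B.st_n by simp
  have wA: "queue_wt t n T i x = (\<Prod>p\<in>{..<n} - T. t (the (A.fv n p)))"
    unfolding queue_wt_def A.st_n by simp
  have "(\<Prod>p\<in>{..<n} - (T - {j0}). t (the (B.fv n p))) = t (the (B.fv n j0)) * (\<Prod>p\<in>{..<n} - T. t (the (B.fv n p)))"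
    unfolding e using j0T by (subst prod.insert) auto
  also have "(\<Prod>p\<in>{..<n} - T. t (the (B.fv n p))) = (\<Prod>p\<in>{..<n} - T. t (the (A.fv n p)))"
  proof (rule prod.cong)
    fix q assume q: "q \<in> {..<n} - T"
    have "T \<subset> {..<n}" using Tn q by auto
    hence "card T < n" using psubset_card_mono[of "{..<n}" T] by simp
    hence "A.fv n q \<noteq> None" using A.fv_all q by simp
    thus "t (the (B.fv n q)) = t (the (A.fv n q))" using I q by (auto simp: INV_def)
  qed simp
  finally show ?thesis using wA wB I by (simp add: INV_def)
qed

end

end


lemma gl: "length (filter P xs) = size (filter_mset P (mset xs))"
  by (metis mset_filter size_mset)

lemma filter_len_pl: "length (filter P (map fst (pl n i x))) = length (filter P (map (psize i x) [0..<n]))"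
  unfolding gl pl_mset ..

locale qout = qrun +
  assumes xlen: "length x = n"
  and xfin: "\<And>p. p < n \<Longrightarrow> x!p \<noteq> \<infinity> \<Longrightarrow> x!p < enat i"
  and xpos: "\<And>p. p < n \<Longrightarrow> x!p \<noteq> 0"
  and ipos: "0 < i"
begin

definition "c = card {p. p < n \<and> x!p \<noteq> \<infinity>}"

lemma psize_small: assumes "p < n" shows "psize i x p < i \<longleftrightarrow> x!p \<noteq> \<infinity>"
proof (cases "x!p")
  case (enat a)
  hence "enat a < enat i" using xfin[OF assms] by simp
  thus ?thesis using enat by (simp add: psize_def)
next
  case infinity thus ?thesis by (simp add: psize_def)
qed

lemma psize_le': assumes "p < n" shows "psize i x p \<le> i"
proof (cases "x!p")
  case (enat a)
  hence "enat a < enat i" using xfin[OF assms] by simp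
  thus ?thesis using enat by (simp add: psize_def)
next
  case infinity thus ?thesis by (simp add: psize_def)
qed

lemma psize_pos: assumes "p < n" shows "0 < psize i x p"
proof (cases "x!p")
  case (enat a)
  hence "a \<noteq> 0" using xpos[OF assms] by (auto simp: zero_enat_def)
  thus ?thesis using enat by (simp add: psize_def)
next
  case infinity thus ?thesis using ipos by (simp add: psize_def)
qed

lemma Lk_le: "k < n \<Longrightarrow> fst (L!k) \<le> i"
  using pl_fst[of k n i x] pl_snd[of k n i x] psize_le' by simp

lemma Lk_pos: "k < n \<Longrightarrow> 0 < fst (L!k)"
  using pl_fst[of k n i x] pl_snd[of k n i x] psize_pos by simp

lemma small_iff: "k < n \<Longrightarrow> fst (L!k) < i \<longleftrightarrow> k < c"
proof -
  assume k: "k < n"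
  define S where "S = {k. k < n \<and> fst (L!k) < i}"
  have finS: "finite S" unfolding S_def by auto
  have dc: "\<And>a b. b \<in> S \<Longrightarrow> a \<le> b \<Longrightarrow> a \<in> S"
  proof -
    fix a b assume "b \<in> S" "a \<le> b"
    hence "b < n" "fst (L!b) < i" "a \<le> b" unfolding S_def by auto
    moreover have "fst (L!a) \<le> fst (L!b)" using pl_sorted[of a b n i x] calculation by simp
    ultimately show "a \<in> S" unfolding S_def by simp
  qed
  have "card S = card {ia. ia < length (map fst L) \<and> map fst L ! ia < i}"
    by (rule arg_cong[where f=card]) (auto simp: S_def)
  also have "\<dots> = length (filter (\<lambda>a. a < i) (map fst L))" by (simp only: length_filter_conv_card)
  also have "\<dots> = length (filter (\<lambda>a. a < i) (map (psize i x) [0..<n]))" by (rule filter_len_pl)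
  also have "\<dots> = card {ia. ia < length (map (psize i x) [0..<n]) \<and> map (psize i x) [0..<n] ! ia < i}"
    by (simp only: length_filter_conv_card)
  also have "\<dots> = card {p. p < n \<and> psize i x p < i}" by (rule arg_cong[where f=card]) auto
  also have "{p. p < n \<and> psize i x p < i} = {p. p < n \<and> x!p \<noteq> \<infinity>}" using psize_small by auto
  finally have cS: "card S = c" unfolding c_def .
  have "S = {..<card S}" by (rule down_closed_card[OF finS dc])
  hence "k \<in> S \<longleftrightarrow> k < c" using cS by auto
  thus ?thesis using k S_def by simp
qed

lemma c_le: "c \<le> n"
proof -
  have "{p. p < n \<and> x!p \<noteq> \<infinity>} \<subseteq> {..<n}" by auto
  thus ?thesis unfolding c_def using card_mono[of "{..<n}"] by fastforce
qed

lemma out_nth: "q < n \<Longrightarrow> queue_out n T i x ! q = (if q \<in> T then enat (the (occ n q)) else \<infinity>)"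
proof -
  have af: "\<And>q. q \<in> T \<Longrightarrow> occ n q \<noteq> None" using all_filled by blast
  assume "q < n" thus ?thesis unfolding queue_out_def st_n[symmetric] by (auto dest: af split: option.split)
qed

lemma out_len[simp]: "length (queue_out n T i x) = n" by (simp add: queue_out_def)

lemma occ_range: "occ n q = Some a \<Longrightarrow> 0 < a \<and> a \<le> i"
proof -
  assume "occ n q = Some a"
  then obtain k0 where "k0 < n" "a = fst (L!k0)" using occ_vals[of n q a] by auto
  thus ?thesis using Lk_le Lk_pos by simp
qed

lemma out_fin_iff: "q < n \<Longrightarrow> queue_out n T i x ! q \<noteq> \<infinity> \<longleftrightarrow> q \<in> T"
  using out_nth by simp

lemma out_range: "q < n \<Longrightarrow> queue_out n T i x ! q \<noteq> \<infinity> \<Longrightarrow> queue_out n T i x ! q \<noteq> 0 \<and> queue_out n T i x ! q \<le> enat i"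
proof -
  assume q: "q < n" "queue_out n T i x ! q \<noteq> \<infinity>"
  hence qT: "q \<in> T" using out_fin_iff by simp
  then obtain a where a: "occ n q = Some a" using all_filled by auto
  have "0 < a \<and> a \<le> i" using occ_range[OF a] .
  thus ?thesis using out_nth[OF q(1)] qT a by (simp add: zero_enat_def)
qed

lemma has_i: assumes "c < card T" shows "\<exists>q<n. queue_out n T i x ! q = enat i"
proof -
  have cn: "c < n" using assms card_mono[OF _ Tn] by simp
  have "card {q. occ c q \<noteq> None} = c" using card_filled[of c] cn assms by simp
  have fr: "frees n T (occ c) \<noteq> {}"
  proof
    assume e: "frees n T (occ c) = {}"
    have "T \<subseteq> {q. occ c q \<noteq> None}" using e Tn by (auto simp: frees_def)
    hence "card T \<le> card {q. occ c q \<noteq> None}" by (rule card_mono[OF filled_fin[OF less_imp_le[OF cn]]])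
    thus False using \<open>card {q. occ c q \<noteq> None} = c\<close> assms by simp
  qed
  have Li: "fst (L!c) = i" using small_iff[OF cn] Lk_le[OF cn] by simp
  obtain q0 where q0: "q0 \<in> frees n T (occ c)" "occ (Suc c) = (occ c)(q0 := Some (fst (L!c)))"
    using step_cases[OF cn] fr by blast
  have "occ (Suc c) q0 = Some i" using q0 Li by simp
  hence "occ n q0 = Some i" using occ_mono[of "Suc c" n q0 i] cn by simp
  moreover have "q0 \<in> T" "q0 < n" using q0 by (auto simp: frees_def)
  ultimately show ?thesis using out_nth by auto
qed

lemma no_i: assumes "card T \<le> c" "q < n" shows "queue_out n T i x ! q \<noteq> enat i"
proof
  assume h: "queue_out n T i x ! q = enat i"
  hence qT: "q \<in> T" using out_fin_iff[OF assms(2)] by auto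
  then obtain a where a: "occ n q = Some a" using all_filled by auto
  obtain k0 where k0: "k0 < card T" "a = fst (L!k0)" using occ_vals[of n q a] a by auto
  have "k0 < n" using k0 assms c_le by simp
  hence "a < i" using small_iff k0 assms by simp
  thus False using h out_nth[OF assms(2)] qT a by simp
qed

end


context jctx begin

lemma off_lin: "j0 \<le> q \<Longrightarrow> q < n \<Longrightarrow> off n j0 q = q - j0"
  using off_eq[OF j0n] by simp

lemma C1: assumes fin: "x!j0 \<noteq> \<infinity>" and j: "j0 < j" "j < n"
  and bnd: "\<And>q. q < n \<Longrightarrow> x!q \<noteq> \<infinity> \<Longrightarrow> x!q \<le> K" and wj: "jump x j0 ! j = K" and Kf: "K \<noteq> \<infinity>"
  shows "x!j = K" "\<And>q. q < n \<Longrightarrow> off n j0 j < off n j0 q \<Longrightarrow> jump x j0 ! q = x!q"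
    "\<exists>q. j0 < q \<and> q \<le> j \<and> jump x j0 ! q = x!j0"
proof -
  have jq: "\<And>q. q < n \<Longrightarrow> jump x j0 ! q = cfv x j0 q" using jump_cf[OF fin] by simp
  have jj0: "j \<noteq> j0" using j by simp
  show xj: "x!j = K"
  proof (cases "x!j \<noteq> \<infinity> \<and> pmx x j0 j < x!j")
    case True
    hence "cfv x j0 j = pmx x j0 j" using jj0 by (simp add: cfv_def)
    hence "pmx x j0 j = K" using jq[OF j(2)] wj by simp
    moreover have "x!j \<le> K" using bnd[OF j(2)] True by simp
    ultimately show ?thesis using True by (auto dest: leD)
  next
    case False
    have "cfv x j0 j = x!j" unfolding cfv_def by (simp only: if_not_P[OF jj0] if_not_P[OF False])
    thus ?thesis using jq[OF j(2)] wj by simp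
  qed
  show "\<And>q. q < n \<Longrightarrow> off n j0 j < off n j0 q \<Longrightarrow> jump x j0 ! q = x!q"
  proof -
    fix q assume q: "q < n" "off n j0 j < off n j0 q"
    have qj0: "q \<noteq> j0" using q j0n by auto
    have "x!j \<le> pmx x j0 q" by (rule pm_ge) (use q j xj Kf in auto)
    moreover have "x!q \<noteq> \<infinity> \<Longrightarrow> x!q \<le> x!j" using bnd[OF q(1)] xj by simp
    ultimately have "\<not>(x!q \<noteq> \<infinity> \<and> pmx x j0 q < x!q)"
    proof (intro notI)
      assume a: "x!j \<le> pmx x j0 q" "x!q \<noteq> \<infinity> \<Longrightarrow> x!q \<le> x!j" and h: "x!q \<noteq> \<infinity> \<and> pmx x j0 q < x!q"
      have "x!q \<le> pmx x j0 q" using a(2)[OF conjunct1[OF h]] a(1) by (rule order.trans)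
      thus False using h by (auto dest: leD)
    qed
    hence "cfv x j0 q = x!q" unfolding cfv_def by (simp only: if_not_P[OF qj0] if_False if_not_P)
    thus "jump x j0 ! q = x!q" using jq[OF q(1)] by simp
  qed
  show "\<exists>q. j0 < q \<and> q \<le> j \<and> jump x j0 ! q = x!j0"
  proof (cases "\<exists>r. j0 < r \<and> r \<le> j \<and> x!r \<noteq> \<infinity> \<and> x!j0 < x!r")
    case True
    define S where "S = {r. j0 < r \<and> r \<le> j \<and> x!r \<noteq> \<infinity> \<and> x!j0 < x!r}"
    have finS: "finite S" unfolding S_def by auto
    have neS: "S \<noteq> {}" using True S_def by auto
    obtain q where q: "q \<in> S" "\<forall>r\<in>S. q \<le> r" using ex_argmin[OF finS neS, of id] by auto
    have qn: "q < n" "j0 < q" "q \<le> j" "x!q \<noteq> \<infinity>" "x!j0 < x!q" using q(1) j unfolding S_def by auto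
    have oq: "off n j0 q = q - j0" using off_lin qn by simp
    have pm: "pmx x j0 q = x!j0"
    proof (rule pm_eqI)
      show "j0 < length x" by (rule j0n)
      show "off (length x) j0 j0 < off (length x) j0 q" using oq qn j0n by simp
      show "x!j0 \<noteq> \<infinity>" by (rule fin)
      fix r assume r: "r < length x" "off (length x) j0 r < off (length x) j0 q" "x!r \<noteq> \<infinity>"
      show "x!r \<le> x!j0"
      proof (cases "r = j0")
        case True thus ?thesis by simp
      next
        case False
        have "j0 \<le> r"
        proof (rule ccontr)
          assume "\<not> j0 \<le> r"
          hence "off n j0 r = r + n - j0" using off_eq[OF j0n r(1)] by simp
          thus False using r(2) oq qn by simp
        qed
        hence "off n j0 r = r - j0" using off_lin r(1) by simp
        hence "j0 < r" "r < q" using r(2) oq False \<open>j0 \<le> r\<close> by auto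
        hence "r \<notin> S" using q(2) by auto
        thus ?thesis using \<open>j0 < r\<close> \<open>r < q\<close> qn r(3) unfolding S_def by (auto simp: not_less)
      qed
    qed
    have "cfv x j0 q = x!j0" using pm qn by (auto simp: cfv_def)
    thus ?thesis using jq[OF qn(1)] qn by auto
  next
    case False
    hence "\<not> x!j0 < x!j" using j xj Kf by auto
    hence "x!j0 = K" using bnd[OF j0n fin] xj by simp
    thus ?thesis using j wj by auto
  qed
qed

end

lemma maxsize_eq: assumes "\<And>e. e \<in> set w \<Longrightarrow> e \<noteq> \<infinity> \<Longrightarrow> e \<le> enat M" "enat M \<in> set w"
  shows "maxsize w = M"
  unfolding maxsize_def
proof (rule Max_eqI)
  have "{the_enat x |x. x \<in> set w \<and> x \<noteq> \<infinity>} \<subseteq> the_enat ` set w" by auto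
  thus "finite (insert 0 {the_enat x |x. x \<in> set w \<and> x \<noteq> \<infinity>})" using finite_subset by auto
  fix y assume "y \<in> insert 0 {the_enat x |x. x \<in> set w \<and> x \<noteq> \<infinity>}"
  thus "y \<le> M"
  proof
    assume "y = 0" thus ?thesis by simp
  next
    assume "y \<in> {the_enat x |x. x \<in> set w \<and> x \<noteq> \<infinity>}"
    then obtain e where e: "y = the_enat e" "e \<in> set w" "e \<noteq> \<infinity>" by blast
    have "e \<le> enat M" using assms(1) e(2,3) by blast
    thus ?thesis using e(1,3) by (cases e) auto
  qed
next
  show "M \<in> insert 0 {the_enat x |x. x \<in> set w \<and> x \<noteq> \<infinity>}" using assms(2) by force
qed


lemma off_cmp: assumes "j0 < k" "k \<le> N" "r < k" "q < k"
  shows "off N j0 r < off N j0 q \<longleftrightarrow> off k j0 r < off k j0 q"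
proof -
  have N: "j0 < N" using assms by simp
  show ?thesis using off_eq[OF N, of r] off_eq[OF N, of q] off_eq[OF assms(1), of r] off_eq[OF assms(1), of q] assms
    by (auto split: if_splits)
qed

lemma ring_conv: fixes a b :: "enat list"
  assumes j: "j0 < length a" and fin: "a!j0 \<noteq> \<infinity>" and bb: "\<And>e. e \<in> set b \<Longrightarrow> e \<noteq> \<infinity> \<Longrightarrow> e \<le> a!j0"
  shows "jump (a @ b) j0 = jump a j0 @ b"
proof -
  define k where "k = length a"
  define N where "N = length (a @ b)"
  have kN: "k \<le> N" unfolding k_def N_def by simp
  interpret X: jctx "a @ b" j0 by unfold_locales (use j in simp)
  interpret A: jctx a j0 by unfold_locales (rule j)
  have fin': "(a @ b) ! j0 \<noteq> \<infinity>" using fin j by (simp add: nth_append)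
  have JX: "jump (a @ b) j0 = map (cfv (a @ b) j0) [0..<N]" using X.jump_cf[OF fin'] N_def by simp
  have JA: "jump a j0 = map (cfv a j0) [0..<k]" using A.jump_cf[OF fin] k_def by simp
  show ?thesis
  proof (rule nth_equalityI)
    show "length (jump (a @ b) j0) = length (jump a j0 @ b)" by simp
    fix q assume "q < length (jump (a @ b) j0)"
    hence qN: "q < N" using N_def by simp
    show "jump (a @ b) j0 ! q = (jump a j0 @ b) ! q"
    proof (cases "q < k")
      case False
      have qj: "q \<noteq> j0" using False j k_def by auto
      have o0: "off N j0 j0 < off N j0 q" using off_zero_iff[of j0 N q] qN qj j kN k_def by simp
      have "(a @ b) ! j0 \<le> pmx (a @ b) j0 q" by (rule pm_ge) (use o0 fin' j kN N_def k_def in auto)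
      hence pmge: "a ! j0 \<le> pmx (a @ b) j0 q" using j by (simp add: nth_append)
      have bq: "(a @ b) ! q = b ! (q - k)" using False k_def by (simp add: nth_append)
      have bin: "b ! (q - k) \<in> set b" using False qN N_def k_def by simp
      have "\<not>((a @ b) ! q \<noteq> \<infinity> \<and> pmx (a @ b) j0 q < (a @ b) ! q)"
      proof
        assume h: "(a @ b) ! q \<noteq> \<infinity> \<and> pmx (a @ b) j0 q < (a @ b) ! q"
        have "(a @ b) ! q \<le> pmx (a @ b) j0 q" using bb[OF bin] h bq pmge by (auto dest: order.trans)
        thus False using h by (auto dest: leD)
      qed
      hence "cfv (a @ b) j0 q = (a @ b) ! q" unfolding cfv_def by (simp only: if_not_P[OF qj] if_False if_not_P)
      thus ?thesis using JX qN False bq k_def by (simp add: nth_append)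
    next
      case True
      have vq: "(a @ b) ! q = a ! q" using True k_def by (simp add: nth_append)
      have "cfv (a @ b) j0 q = cfv a j0 q"
      proof (cases "q = j0")
        case True thus ?thesis by (simp add: cfv_def)
      next
        case qj: False
        define SA where "SA = {a!r | r. r < length a \<and> off (length a) j0 r < off (length a) j0 q \<and> a!r \<noteq> \<infinity>}"
        define SX where "SX = {(a @ b)!r | r. r < length (a @ b) \<and> off (length (a @ b)) j0 r < off (length (a @ b)) j0 q \<and> (a @ b)!r \<noteq> \<infinity>}"
        have finSA: "finite SA" unfolding SA_def by (rule pm_fin)
        have j0A: "a!j0 \<in> SA" unfolding SA_def using off_zero_iff[OF j, of q] True k_def qj fin j by force
        have "pmx (a @ b) j0 q = Max SX" unfolding pmx_def SX_def ..
        also have "Max SX = Max SA"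
        proof (rule Max_eqI)
          show "finite SX" unfolding SX_def by (rule pm_fin)
          fix e assume "e \<in> SX"
          then obtain r where r: "e = (a @ b)!r" "r < N" "off N j0 r < off N j0 q" "(a @ b)!r \<noteq> \<infinity>"
            unfolding SX_def N_def by blast
          show "e \<le> Max SA"
          proof (cases "r < k")
            case True
            have "off k j0 r < off k j0 q" using off_cmp[OF j[folded k_def] kN True \<open>q < k\<close>] r(3) by simp
            hence "a!r \<in> SA" unfolding SA_def using True r(4) k_def by (auto simp: nth_append)
            thus ?thesis using r(1) True k_def Max_ge[OF finSA] by (simp add: nth_append)
          next
            case False
            have "e \<in> set b" using r(1,2) False k_def N_def by (simp add: nth_append)
            hence "e \<le> a!j0" using bb r by simp
            thus ?thesis using Max_ge[OF finSA j0A] by (rule order.trans)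
          qed
        next
          have "Max SA \<in> SA" using Max_in[OF finSA] j0A by auto
          then obtain r where r: "Max SA = a!r" "r < k" "off k j0 r < off k j0 q" "a!r \<noteq> \<infinity>"
            unfolding SA_def k_def by blast
          have "off N j0 r < off N j0 q" using off_cmp[OF j[folded k_def] kN r(2) \<open>q < k\<close>] r(3) by simp
          hence m: "Max SA = (a @ b)!r \<and> r < length (a @ b) \<and> off (length (a @ b)) j0 r < off (length (a @ b)) j0 q \<and> (a @ b)!r \<noteq> \<infinity>"
            using r kN k_def N_def by (simp add: nth_append)
          thus "Max SA \<in> SX" unfolding SX_def by blast
        qed
        also have "Max SA = pmx a j0 q" unfolding pmx_def SA_def ..
        finally show ?thesis unfolding cfv_def using vq by simp
      qed
      thus ?thesis using JX JA qN True k_def by (simp add: nth_append)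
    qed
  qed
qed

context jctx begin

lemma vals_ge: assumes fin: "x!j0 \<noteq> \<infinity>" "a < n" "x!a \<noteq> \<infinity>"
  shows "jump x j0 ! a = x!a \<or> x!j0 \<le> x!a"
proof (cases "a = j0")
  case True thus ?thesis by simp
next
  case False
  have "off n j0 j0 < off n j0 a" using off_zero_iff[OF j0n assms(2)] False j0n by simp
  hence pm: "x!j0 \<le> pmx x j0 a" using pm_ge[of j0 x j0 a] j0n fin by simp
  show ?thesis
  proof (cases "pmx x j0 a < x!a")
    case True thus ?thesis using pm by (auto dest: order.trans)
  next
    case F: False
    have "cfv x j0 a = x!a" unfolding cfv_def using F by (simp only: if_not_P[OF False] simp_thms if_False)
    thus ?thesis using jump_cf[OF fin(1)] assms(2) by simp
  qed
qed

lemma count_M: assumes fin: "x!j0 \<noteq> \<infinity>" and j: "j0 < j" "j < n"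
  and bnd: "\<And>q. q < n \<Longrightarrow> x!q \<noteq> \<infinity> \<Longrightarrow> x!q \<le> enat M" and wj: "jump x j0 ! j = enat M"
  shows "card {q. q < n \<and> x!q = enat M} = Suc (card {q. q < n \<and> jump x j0 ! q = enat M})"
proof -
  have jq: "\<And>q. q < n \<Longrightarrow> jump x j0 ! q = cfv x j0 q" using jump_cf[OF fin] by simp
  define A' where "A' = {q. q < n \<and> x!q = enat M}"
  define A where "A = {q. q < n \<and> jump x j0 ! q = enat M}"
  have finA': "finite A'" unfolding A'_def by auto
  have xj: "x!j = enat M" using C1(1)[OF fin j bnd wj] by simp
  have sub: "A \<subseteq> A'"
  proof
    fix q assume "q \<in> A"
    hence q: "q < n" "cfv x j0 q = enat M" using jq unfolding A_def by auto
    have qj: "q \<noteq> j0" using q by (auto simp: cfv_def)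
    show "q \<in> A'"
    proof (cases "x!q \<noteq> \<infinity> \<and> pmx x j0 q < x!q")
      case True
      hence "pmx x j0 q = enat M" using q qj by (simp add: cfv_def)
      moreover have "x!q \<le> enat M" using bnd[OF q(1)] True by simp
      ultimately show ?thesis using True by (auto dest: leD)
    next
      case False
      hence "cfv x j0 q = x!q" unfolding cfv_def by (simp only: if_not_P[OF qj] if_False if_not_P)
      thus ?thesis using q unfolding A'_def by simp
    qed
  qed
  have neA': "A' \<noteq> {}" using xj j unfolding A'_def by auto
  obtain qs where qs: "qs \<in> A'" "\<forall>q\<in>A'. off n j0 qs \<le> off n j0 q" using ex_argmin[OF finA' neA'] by blast
  have qsn: "qs < n" "x!qs = enat M" using qs(1) unfolding A'_def by auto
  have qsA: "qs \<notin> A"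
  proof
    assume "qs \<in> A"
    hence c: "cfv x j0 qs = enat M" using jq qsn unfolding A_def by auto
    hence qsj: "qs \<noteq> j0" by (auto simp: cfv_def)
    have "pmx x j0 qs < enat M"
    proof -
      have "pmx x j0 qs \<in> {x!r | r. r < length x \<and> off (length x) j0 r < off (length x) j0 qs \<and> x!r \<noteq> \<infinity>}"
        unfolding pmx_def
      proof (rule Max_in[OF pm_fin])
        show "{x!r | r. r < length x \<and> off (length x) j0 r < off (length x) j0 qs \<and> x!r \<noteq> \<infinity>} \<noteq> {}"
          using off_zero_iff[OF j0n qsn(1)] qsj fin j0n by force
      qed
      then obtain r where r: "pmx x j0 qs = x!r" "r < n" "off n j0 r < off n j0 qs" "x!r \<noteq> \<infinity>" by blast
      have "r \<notin> A'" using qs(2) r(3) by fastforce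
      hence "x!r \<noteq> enat M" using r(2) unfolding A'_def by simp
      moreover have "x!r \<le> enat M" using bnd[OF r(2) r(4)] .
      ultimately show ?thesis using r(1) by simp
    qed
    hence "cfv x j0 qs = pmx x j0 qs" using qsn qsj by (simp add: cfv_def)
    thus False using c \<open>pmx x j0 qs < enat M\<close> by simp
  qed
  have eq: "A' = insert qs A"
  proof (intro equalityI subsetI)
    fix q assume qA': "q \<in> A'"
    show "q \<in> insert qs A"
    proof (rule ccontr)
      assume nq: "q \<notin> insert qs A"
      have qn: "q < n" "x!q = enat M" using qA' unfolding A'_def by auto
      have "off n j0 qs \<le> off n j0 q" using qs(2) qA' by simp
      moreover have "off n j0 qs \<noteq> off n j0 q" using off_inj[OF j0n qsn(1) qn(1)] nq by auto
      ultimately have lt: "off n j0 qs < off n j0 q" by simp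
      hence qj: "q \<noteq> j0" using j0n by auto
      have pm: "enat M \<le> pmx x j0 q" using pm_ge[of qs x j0 q] qsn lt by simp
      hence "\<not>(x!q \<noteq> \<infinity> \<and> pmx x j0 q < x!q)" using qn by (auto dest: leD)
      hence "cfv x j0 q = x!q" unfolding cfv_def by (simp only: if_not_P[OF qj] if_False if_not_P)
      hence "q \<in> A" using qn jq unfolding A_def by simp
      thus False using nq by simp
    qed
  next
    fix q assume "q \<in> insert qs A" thus "q \<in> A'" using qs(1) sub by auto
  qed
  have finA: "finite A" using finA' sub finite_subset by blast
  show ?thesis using eq qsA finA unfolding A'_def[symmetric] A_def[symmetric] by simp
qed

end

lemma count_card: "count_list xs y = card {q. q < length xs \<and> xs!q = y}"
  unfolding count_list_eq_length_filter length_filter_conv_card by (rule arg_cong[where f=card]) auto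


lemma mlq_out_snoc: "mlq_out n i (Ts @ [T]) x = queue_out n T (i + length Ts) (mlq_out n i Ts x)"
  by (induction Ts arbitrary: i x) auto

lemma mlq_wt_snoc: "mlq_wt t n i (Ts @ [T]) x = mlq_wt t n i Ts x * queue_wt t n T (i + length Ts) (mlq_out n i Ts x)"
  by (induction Ts arbitrary: i x) (auto simp: mult.assoc)

lemma level: "(\<forall>T\<in>set Ts. T \<subseteq> {..<n}) \<Longrightarrow>
   length (mlq_word n Ts) = n \<and>
   (\<forall>p<n. mlq_word n Ts ! p \<noteq> \<infinity> \<longrightarrow> mlq_word n Ts ! p < enat (Suc (length Ts)) \<and> mlq_word n Ts ! p \<noteq> 0) \<and>
   (\<forall>p<n. mlq_word n Ts ! p \<noteq> \<infinity> \<longleftrightarrow> (Ts \<noteq> [] \<and> p \<in> last Ts))"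
proof (induction Ts rule: rev_induct)
  case Nil thus ?case by (simp add: mlq_word_def)
next
  case (snoc T Ts)
  define y where "y = mlq_word n Ts"
  have IH: "length y = n" "\<And>p. p < n \<Longrightarrow> y ! p \<noteq> \<infinity> \<Longrightarrow> y ! p < enat (Suc (length Ts)) \<and> y ! p \<noteq> 0"
    using snoc y_def by auto
  have Tn: "T \<subseteq> {..<n}" using snoc by simp
  interpret Q: qout n T "Suc (length Ts)" y
    by unfold_locales (use Tn IH in \<open>auto simp: zero_enat_def\<close>)
  have e: "mlq_word n (Ts @ [T]) = queue_out n T (Suc (length Ts)) y"
    unfolding mlq_word_def mlq_out_snoc y_def mlq_word_def by simp
  have c1: "length (mlq_word n (Ts @ [T])) = n" using e by simp
  have c2: "\<forall>p<n. mlq_word n (Ts @ [T]) ! p \<noteq> \<infinity> \<longrightarrow> mlq_word n (Ts @ [T]) ! p < enat (Suc (length (Ts @ [T]))) \<and> mlq_word n (Ts @ [T]) ! p \<noteq> 0"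
  proof (intro allI impI)
    fix p assume p: "p < n" "mlq_word n (Ts @ [T]) ! p \<noteq> \<infinity>"
    have "queue_out n T (Suc (length Ts)) y ! p \<noteq> 0 \<and> queue_out n T (Suc (length Ts)) y ! p \<le> enat (Suc (length Ts))"
      using Q.out_range p e by simp
    thus "mlq_word n (Ts @ [T]) ! p < enat (Suc (length (Ts @ [T]))) \<and> mlq_word n (Ts @ [T]) ! p \<noteq> 0"
      using e by (cases "queue_out n T (Suc (length Ts)) y ! p") auto
  qed
  have c3: "\<forall>p<n. mlq_word n (Ts @ [T]) ! p \<noteq> \<infinity> \<longleftrightarrow> (Ts @ [T] \<noteq> [] \<and> p \<in> last (Ts @ [T]))"
    using Q.out_fin_iff e by simp
  show ?case using c1 c2 c3 by blast
qed

lemma sum_ge_len: "\<forall>a\<in>set m. 0 < (a::nat) \<Longrightarrow> length m \<le> sum_list m"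
  by (induction m) auto

lemma mlq_split: assumes "is_mlq n m (Ts0 @ [T])"
  shows "m = butlast m @ [last m]" "length (butlast m) = length Ts0" "T \<subseteq> {..<n}" "card T = sum_list m"
    "\<forall>T'\<in>set Ts0. T' \<subseteq> {..<n}" "0 < last m"
    "Ts0 \<noteq> [] \<Longrightarrow> card (last Ts0) = sum_list (butlast m)"
proof -
  have ne: "m \<noteq> []" using assms by (simp add: is_mlq_def is_type_def)
  show m: "m = butlast m @ [last m]" using ne by simp
  have lm: "length m = Suc (length Ts0)" using assms by (simp add: is_mlq_def)
  show lb: "length (butlast m) = length Ts0" using lm by simp
  have A: "\<And>l. l < length m \<Longrightarrow> (Ts0 @ [T]) ! l \<subseteq> {..<n} \<and> card ((Ts0 @ [T]) ! l) = sum_list (take (Suc l) m)"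
    using assms by (simp add: is_mlq_def)
  have "T \<subseteq> {..<n} \<and> card T = sum_list (take (Suc (length Ts0)) m)" using A[of "length Ts0"] lm by simp
  thus "T \<subseteq> {..<n}" "card T = sum_list m" using lm by auto
  show "\<forall>T'\<in>set Ts0. T' \<subseteq> {..<n}"
  proof
    fix T' assume "T' \<in> set Ts0"
    then obtain l where l: "l < length Ts0" "Ts0 ! l = T'" by (auto simp: in_set_conv_nth)
    thus "T' \<subseteq> {..<n}" using A[of l] lm by (simp add: nth_append)
  qed
  show "0 < last m" using assms ne by (simp add: is_mlq_def is_type_def)
  assume ne0: "Ts0 \<noteq> []"
  have l1: "length Ts0 - 1 < length m" using lm by simp
  have "card ((Ts0 @ [T]) ! (length Ts0 - 1)) = sum_list (take (Suc (length Ts0 - 1)) m)" using A[OF l1] by simp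
  moreover have "(Ts0 @ [T]) ! (length Ts0 - 1) = last Ts0" using ne0 by (simp add: nth_append last_conv_nth)
  moreover have "take (Suc (length Ts0 - 1)) m = butlast m" using ne0 lm by (simp add: butlast_conv_take)
  ultimately show "card (last Ts0) = sum_list (butlast m)" by simp
qed

lemma mlq_mod: assumes "is_mlq n m (Ts0 @ [T])" "T' \<subseteq> {..<n}" "0 < a" "card T' = sum_list (butlast m) + a"
  shows "is_mlq n (butlast m @ [a]) (Ts0 @ [T'])"
proof -
  have ne: "m \<noteq> []" using assms by (simp add: is_mlq_def is_type_def)
  have lm: "length m = Suc (length Ts0)" using assms by (simp add: is_mlq_def)
  have A: "\<And>l. l < length m \<Longrightarrow> (Ts0 @ [T]) ! l \<subseteq> {..<n} \<and> card ((Ts0 @ [T]) ! l) = sum_list (take (Suc l) m)"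
    using assms by (simp add: is_mlq_def)
  have pos: "\<forall>b\<in>set (butlast m). 0 < b" using assms(1) by (simp add: is_mlq_def is_type_def in_set_butlastD)
  have cn: "card T' \<le> n" using card_mono[OF _ assms(2)] by simp
  show ?thesis unfolding is_mlq_def is_type_def
  proof (intro conjI allI impI)
    show "butlast m @ [a] \<noteq> []" by simp
    show "\<forall>b\<in>set (butlast m @ [a]). 0 < b" using pos assms(3) by auto
    show "sum_list (butlast m @ [a]) \<le> n" using cn assms(4) by simp
    show "length (Ts0 @ [T']) = length (butlast m @ [a])" using lm by simp
    fix l assume l: "l < length (butlast m @ [a])"
    show "(Ts0 @ [T']) ! l \<subseteq> {..<n}"
    proof (cases "l < length Ts0")
      case True thus ?thesis using A[of l] lm by (simp add: nth_append)
    next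
      case False thus ?thesis using l lm assms(2) by (simp add: nth_append)
    qed
    show "card ((Ts0 @ [T']) ! l) = sum_list (take (Suc l) (butlast m @ [a]))"
    proof (cases "l < length Ts0")
      case True
      have "take (Suc l) (butlast m @ [a]) = take (Suc l) m"
        using True lm by (simp add: butlast_conv_take min_def)
      thus ?thesis using A[of l] lm True by (simp add: nth_append)
    next
      case False
      hence "l = length Ts0" using l lm by simp
      thus ?thesis using lm assms(4) by (simp add: nth_append)
    qed
  qed
qed

lemma core: assumes Ts0: "\<forall>T\<in>set Ts0. T \<subseteq> {..<N}" and T: "T \<subseteq> {..<N}" "j0 < N" "j0 \<notin> T"
  shows "queue_out N T (Suc (length Ts0)) (mlq_word N Ts0) = jump (queue_out N (insert j0 T) (Suc (length Ts0)) (mlq_word N Ts0)) j0"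
    "\<lbrakk>j0 < j; j < N; \<forall>q. j0 < q \<and> q \<le> j \<longrightarrow> q \<in> T;
      queue_out N (insert j0 T) (Suc (length Ts0)) (mlq_word N Ts0) ! j = enat (Suc (length Ts0))\<rbrakk> \<Longrightarrow>
     queue_wt t N T (Suc (length Ts0)) (mlq_word N Ts0) =
       t (the_enat (queue_out N (insert j0 T) (Suc (length Ts0)) (mlq_word N Ts0) ! j0)) *
       queue_wt t N (insert j0 T) (Suc (length Ts0)) (mlq_word N Ts0)"
proof -
  define x where "x = mlq_word N Ts0"
  define r where "r = Suc (length Ts0)"
  have lv: "length x = N" "\<And>p. p < N \<Longrightarrow> x!p \<noteq> \<infinity> \<Longrightarrow> x!p < enat r"
    using level[OF Ts0] unfolding x_def r_def by auto
  interpret C: qcmp N "insert j0 T" r x j0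
    by unfold_locales (use T lv in auto)
  have e: "insert j0 T - {j0} = T" using T by auto
  show "queue_out N T (Suc (length Ts0)) (mlq_word N Ts0) = jump (queue_out N (insert j0 T) (Suc (length Ts0)) (mlq_word N Ts0)) j0"
    using C.L1 unfolding e x_def r_def by simp
  assume h: "j0 < j" "j < N" "\<forall>q. j0 < q \<and> q \<le> j \<longrightarrow> q \<in> T"
    "queue_out N (insert j0 T) (Suc (length Ts0)) (mlq_word N Ts0) ! j = enat (Suc (length Ts0))"
  have TA: "insert j0 T \<subseteq> {..<N}" using T by auto
  have jT: "j \<in> insert j0 T" using h by auto
  have oc: "\<And>q. q < N \<Longrightarrow> q \<in> insert j0 T \<Longrightarrow> queue_out N (insert j0 T) r x ! q = enat (the (C.A.occ N q))"
    unfolding queue_out_def C.A.st_n[symmetric] using C.A.all_filled by (auto split: option.split)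
  have "C.A.occ N j \<noteq> None" using C.A.all_filled jT by simp
  hence occj: "C.A.occ N j = Some r" using oc[OF h(2) jT] h(4) unfolding x_def r_def by auto
  have hj: "\<forall>q. j0 < q \<and> q \<le> j \<longrightarrow> q \<in> insert j0 T" using h by auto
  have "queue_wt t N (insert j0 T - {j0}) r x = t (the (C.A.occ N j0)) * queue_wt t N (insert j0 T) r x"
    by (rule C.L2[OF h(1,2) hj]) (use occj in simp)
  moreover have "the (C.A.occ N j0) = the_enat (queue_out N (insert j0 T) r x ! j0)"
    using oc[of j0] T by simp
  ultimately show "queue_wt t N T (Suc (length Ts0)) (mlq_word N Ts0) =
       t (the_enat (queue_out N (insert j0 T) (Suc (length Ts0)) (mlq_word N Ts0) ! j0)) *
       queue_wt t N (insert j0 T) (Suc (length Ts0)) (mlq_word N Ts0)" unfolding e x_def r_def by simp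
qed


definition fS :: "nat \<Rightarrow> nat set list \<Rightarrow> nat set list" where
  "fS j0 Ts = butlast Ts @ [insert j0 (last Ts)]"
definition gS :: "nat \<Rightarrow> nat set list \<Rightarrow> nat set list" where
  "gS j0 Ts = butlast Ts @ [last Ts - {j0}]"

locale mctx =
  fixes u v :: "enat list" and j0 j :: nat
  assumes word: "is_word (u @ v)" and une: "u \<noteq> []" and vne: "v \<noteq> []"
  and dec: "\<forall>a\<in>set u. \<forall>b\<in>set v. b < a"
  and j0u: "j0 < length u" and uj0: "u ! j0 = \<infinity>"
  and jj: "j0 < j" "j < length u" "u ! j \<noteq> \<infinity>" "\<forall>x\<in>set (u @ v). x \<noteq> \<infinity> \<longrightarrow> x \<le> u ! j"
     "\<forall>i. j0 < i \<and> i < j \<longrightarrow> u ! i \<noteq> \<infinity> \<and> u ! i \<noteq> u ! j"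
begin

abbreviation "N \<equiv> length (u @ v)"
abbreviation "k \<equiv> length u"
abbreviation "M \<equiv> maxsize (u @ v)"

definition "U = {u'. length u' = length u \<and> is_word u'
                     \<and> (\<forall>x\<in>set u'. x \<noteq> \<infinity> \<longrightarrow> x \<le> enat (maxsize (u @ v)))
                     \<and> u' ! j0 \<noteq> \<infinity> \<and> jump u' j0 = u}"

definition "SS w = {Ts. \<exists>m. is_mlq N m Ts \<and> mlq_word N Ts = w}"

lemma uj: "u ! j = enat M"
proof -
  obtain M0 where M0: "u!j = enat M0" using jj(3) by auto
  have "u!j \<in> set (u @ v)" using jj(2) by simp
  hence "maxsize (u @ v) = M0" using jj(4) M0 by (intro maxsize_eq) auto
  thus ?thesis using M0 by simp
qed

lemma Mpos: "0 < M"
proof -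
  have "u!j \<in> set (u @ v)" using jj(2) by simp
  hence "u!j \<noteq> 0" using word by (auto simp: is_word_def)
  thus ?thesis using uj by (simp add: zero_enat_def)
qed

lemma vlt: "b \<in> set v \<Longrightarrow> a \<in> set u \<Longrightarrow> b < a" using dec by blast

lemma ujin: "u!j \<in> set u" using jj(2) by simp

lemma vM: "b \<in> set v \<Longrightarrow> b < enat M" using vlt[OF _ ujin] uj by simp

lemma kN: "k < N" using vne by simp

lemma j0k: "j0 < j" "j < k" using jj by auto

lemma Nlen: "N = k + length v" by simp

lemma fin_between: "j0 < q \<Longrightarrow> q \<le> j \<Longrightarrow> (u @ v) ! q \<noteq> \<infinity>"
  using jj by (cases "q = j") (auto simp: nth_append)

lemma UP: assumes "u' \<in> U"
  shows "u'!j = enat M" "\<exists>q. j0 < q \<and> q \<le> j \<and> u!q = u'!j0" "jump (u' @ v) j0 = u @ v"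
    "\<And>a. a < k \<Longrightarrow> u'!a \<noteq> \<infinity> \<Longrightarrow> u'!a = u!a \<or> u'!j0 \<le> u'!a"
proof -
  have u': "length u' = k" "u'!j0 \<noteq> \<infinity>" "jump u' j0 = u" "\<And>x. x \<in> set u' \<Longrightarrow> x \<noteq> \<infinity> \<Longrightarrow> x \<le> enat M"
    using assms unfolding U_def by auto
  interpret X: jctx u' j0 by unfold_locales (use u' j0u in simp)
  have bnd: "\<And>q. q < length u' \<Longrightarrow> u'!q \<noteq> \<infinity> \<Longrightarrow> u'!q \<le> enat M" using u'(4) by simp
  have wj: "jump u' j0 ! j = enat M" using u'(3) uj by simp
  have jl: "j < length u'" using u'(1) jj by simp
  show "u'!j = enat M" by (rule X.C1(1)[OF u'(2) jj(1) jl bnd wj]) auto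
  have ee: "enat M \<noteq> \<infinity>" by auto
  show ex: "\<exists>q. j0 < q \<and> q \<le> j \<and> u!q = u'!j0" using X.C1(3)[OF u'(2) jj(1) jl bnd wj ee] u'(3) by simp
  then obtain q where q: "j0 < q" "q \<le> j" "u!q = u'!j0" by blast
  have qk: "q < k" using q jj(2) by simp
  have qin: "u!q \<in> set u" by (rule nth_mem[OF qk])
  have "jump (u' @ v) j0 = jump u' j0 @ v"
  proof (rule ring_conv)
    show "j0 < length u'" using u' j0u by simp
    show "u'!j0 \<noteq> \<infinity>" by (rule u'(2))
    fix e assume "e \<in> set v" "e \<noteq> \<infinity>"
    hence "e < u!q" using vlt qin by simp
    thus "e \<le> u'!j0" using q by simp
  qed
  thus "jump (u' @ v) j0 = u @ v" using u'(3) by simp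
  fix a assume "a < k" "u'!a \<noteq> \<infinity>"
  hence d: "jump u' j0 ! a = u'!a \<or> u'!j0 \<le> u'!a" using X.vals_ge[OF u'(2), of a] u' by simp
  thus "u'!a = u!a \<or> u'!j0 \<le> u'!a" using u'(3) by (elim disjE) auto
qed

theorem part2: assumes "u' \<in> U" shows "decomposable (u' @ v) \<and> simpler (u' @ v) (u @ v)"
proof -
  have u': "length u' = k" "u'!j0 \<noteq> \<infinity>" "jump u' j0 = u" "\<And>x. x \<in> set u' \<Longrightarrow> x \<noteq> \<infinity> \<Longrightarrow> x \<le> enat M"
    using assms unfolding U_def by auto
  note P = UP[OF assms]
  obtain q where q: "j0 < q" "q \<le> j" "u!q = u'!j0" using P(2) by blast
  have qk: "q < k" using q jj(2) by simp
  have qin: "u!q \<in> set u" by (rule nth_mem[OF qk])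
  have dcp: "decomposable (u' @ v)"
    unfolding decomposable_def
  proof (intro exI[of _ k] conjI allI impI)
    show "0 < k" using une by simp
    show "k < length (u' @ v)" using u'(1) vne by simp
    fix a b assume a: "a < k" and b: "k \<le> b \<and> b < length (u' @ v)"
    have bk: "b - k < length v" using b u'(1) length_append[of u' v] by linarith
    have "(u' @ v) ! b = v ! (b - k)" using b u'(1) by (simp add: nth_append)
    hence vb: "(u' @ v) ! b \<in> set v" using nth_mem[OF bk] by simp
    have ua: "(u' @ v) ! a = u'!a" using a u'(1) by (simp add: nth_append)
    show "(u' @ v) ! b < (u' @ v) ! a"
    proof (cases "u'!a = \<infinity>")
      case True thus ?thesis using vM[OF vb] ua by (cases "(u' @ v) ! b") auto
    next
      case False
      from P(4)[OF a False] show ?thesis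
      proof
        assume "u'!a = u!a"
        moreover have "u!a \<in> set u" using a by simp
        ultimately show ?thesis using vlt[OF vb] ua by simp
      next
        assume "u'!j0 \<le> u'!a"
        moreover have "(u' @ v) ! b < u!q" using vlt[OF vb qin] .
        ultimately show ?thesis using q(3) ua by (auto dest: order.strict_trans2)
      qed
    qed
  qed
  have all': "\<And>e. e \<in> set (u' @ v) \<Longrightarrow> e \<noteq> \<infinity> \<Longrightarrow> e \<le> enat M"
    using u'(4) vM by (auto intro: less_imp_le)
  have Min': "enat M \<in> set (u' @ v)" using P(1) jj(2) u'(1) by (metis in_set_conv_nth Un_iff set_append)
  have ms': "maxsize (u' @ v) = M" by (rule maxsize_eq[OF all' Min'])
  interpret X: jctx u' j0 by unfold_locales (use u' j0u in simp)
  have cnt: "card {q. q < length u' \<and> u'!q = enat M} = Suc (card {q. q < length u' \<and> jump u' j0 ! q = enat M})"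
    by (rule X.count_M[OF u'(2)]) (use jj u' uj in auto)
  have c0: "count_list u' (enat M) = Suc (count_list u (enat M))"
    using cnt u'(1,3) by (simp only: count_card len_jump)
  have c1: "count_list (u' @ v) (enat M) = Suc (count_list (u @ v) (enat M))"
    using c0 by simp
  have wt1: "word_type (u' @ v) = map (\<lambda>i. count_list (u' @ v) (enat i)) [1..<Suc M]"
    unfolding word_type_def ms' ..
  have wt2: "word_type (u @ v) = map (\<lambda>i. count_list (u @ v) (enat i)) [1..<Suc M]"
    unfolding word_type_def ..
  have lst: "\<And>f. last (map f [1..<Suc M]) = f M" using Mpos by simp
  have "simpler_type (word_type (u' @ v)) (word_type (u @ v))"
    unfolding simpler_type_def wt1 wt2 using Mpos c1 lst by simp
  thus ?thesis using dcp by (simp add: simpler_def)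
qed

end


context mctx begin

lemma SS_split: assumes "Ts \<in> SS w"
  obtains m Ts0 T where "is_mlq N m (Ts0 @ [T])" "Ts = Ts0 @ [T]"
    "queue_out N T (Suc (length Ts0)) (mlq_word N Ts0) = w"
proof -
  obtain m where m: "is_mlq N m Ts" "mlq_word N Ts = w" using assms unfolding SS_def by blast
  have "Ts \<noteq> []" using m(1) by (auto simp: is_mlq_def is_type_def)
  hence e: "Ts = butlast Ts @ [last Ts]" by simp
  have "mlq_word N (butlast Ts @ [last Ts]) = queue_out N (last Ts) (Suc (length (butlast Ts))) (mlq_word N (butlast Ts))"
    unfolding mlq_word_def mlq_out_snoc by simp
  thus ?thesis using that[of m "butlast Ts" "last Ts"] m e by metis
qed

lemma FWD: assumes "Ts \<in> SS (u @ v)"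
  shows "gS j0 (fS j0 Ts) = Ts"
    "take k (mlq_word N (fS j0 Ts)) \<in> U"
    "fS j0 Ts \<in> SS (take k (mlq_word N (fS j0 Ts)) @ v)"
    "t (the_enat (take k (mlq_word N (fS j0 Ts)) ! j0)) * mlq_weight t N (fS j0 Ts) = mlq_weight t N Ts"
proof -
  obtain m Ts0 T where m: "is_mlq N m (Ts0 @ [T])" "Ts = Ts0 @ [T]"
     "queue_out N T (Suc (length Ts0)) (mlq_word N Ts0) = u @ v"
    using SS_split[OF assms] by blast
  note sp = mlq_split[OF m(1)]
  define r where "r = Suc (length Ts0)"
  define x where "x = mlq_word N Ts0"
  have wq: "queue_out N T r x = u @ v" using m(3) r_def x_def by simp
  have lvx: "length x = N" "\<And>p. p < N \<Longrightarrow> x!p \<noteq> \<infinity> \<Longrightarrow> x!p < enat r \<and> x!p \<noteq> 0"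
    "\<And>p. p < N \<Longrightarrow> x!p \<noteq> \<infinity> \<longleftrightarrow> (Ts0 \<noteq> [] \<and> p \<in> last Ts0)"
    using level[OF sp(5)] unfolding x_def r_def by auto
  have xpos: "\<And>p. p < N \<Longrightarrow> x!p \<noteq> 0"
  proof -
    fix p assume p: "p < N"
    show "x!p \<noteq> 0"
    proof (cases "x!p = \<infinity>")
      case True thus ?thesis by simp
    next
      case False thus ?thesis using lvx(2)[OF p False] by simp
    qed
  qed
  have xf: "\<And>p. p < N \<Longrightarrow> x!p \<noteq> \<infinity> \<Longrightarrow> x!p < enat r" using lvx(2) by blast
  interpret Q: qout N T r x by unfold_locales (use sp(3) lvx(1) xpos xf in \<open>auto simp: r_def\<close>)
  have j0N: "j0 < N" using j0u by simp
  have j0T: "j0 \<notin> T" using Q.out_fin_iff[OF j0N] wq uj0 j0u by (simp add: nth_append)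
  have cset: "{p. p < N \<and> x!p \<noteq> \<infinity>} = (if Ts0 = [] then {} else last Ts0)"
  proof -
    have "Ts0 \<noteq> [] \<Longrightarrow> last Ts0 \<subseteq> {..<N}" using sp(5) by simp
    thus ?thesis using lvx(3) by auto
  qed
  have cc: "Q.c = sum_list (butlast m)"
  proof (cases "Ts0 = []")
    case True
    hence "butlast m = []" using sp(2) by (metis length_0_conv)
    thus ?thesis unfolding Q.c_def cset using True by simp
  next
    case False thus ?thesis unfolding Q.c_def cset using sp(7) by simp
  qed
  have smm0: "sum_list (butlast m @ [last m]) = sum_list (butlast m) + last m" by simp
  have smm: "sum_list m = sum_list (butlast m) + last m" using smm0 sp(1)[symmetric] by simp
  have cT: "Q.c < card T" using cc sp(4,6) smm by simp
  obtain q0 where q0: "q0 < N" "queue_out N T r x ! q0 = enat r" using Q.has_i[OF cT] by blast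
  have lvw: "\<And>p. p < N \<Longrightarrow> (u @ v)!p \<noteq> \<infinity> \<Longrightarrow> (u @ v)!p < enat (Suc r)"
    using level[of "Ts0 @ [T]" N] sp(3,5) m(3) unfolding mlq_word_def mlq_out_snoc r_def by (simp add: mlq_word_def)
  have q0in: "(u @ v)!q0 \<in> set (u @ v)" by (rule nth_mem) (use q0 in simp)
  have q0v: "(u @ v)!q0 = enat r" using q0 wq by simp
  have "enat r \<le> u!j" using jj(4) q0in q0v by auto
  hence rM: "r \<le> M" using uj by simp
  have "u!j < enat (Suc r)" using lvw[of j] jj by (simp add: nth_append)
  hence Mr: "M \<le> r" using uj by simp
  have Mr': "M = r" using rM Mr by simp
  define T' where "T' = insert j0 T"
  have T'n: "T' \<subseteq> {..<N}" using sp(3) j0N T'_def by simp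
  define y where "y = queue_out N T' r x"
  have jy: "jump y j0 = u @ v" using core(1)[OF sp(5) sp(3) j0N j0T] wq unfolding y_def T'_def r_def x_def by simp
  interpret Q': qout N T' r x by unfold_locales (use T'n lvx(1) xpos xf in \<open>auto simp: r_def\<close>)
  have ylen: "length y = N" unfolding y_def by (rule Q'.out_len)
  have yfin: "\<And>p. p < N \<Longrightarrow> y!p \<noteq> \<infinity> \<longleftrightarrow> p \<in> T'" unfolding y_def by (rule Q'.out_fin_iff)
  have yr: "\<And>p. p < N \<Longrightarrow> y!p \<noteq> \<infinity> \<Longrightarrow> y!p \<noteq> 0 \<and> y!p \<le> enat r" unfolding y_def by (rule Q'.out_range)
  have yj0: "y!j0 \<noteq> \<infinity>" using yfin[OF j0N] T'_def by simp
  interpret Y: jctx y j0 by unfold_locales (use ylen j0N in simp)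
  have bnd: "\<And>q. q < length y \<Longrightarrow> y!q \<noteq> \<infinity> \<Longrightarrow> y!q \<le> enat M" using yr ylen Mr' by simp
  have wj: "jump y j0 ! j = enat M" using jy uj jj by (simp add: nth_append)
  have jN: "j < length y" using ylen jj by simp
  have ee: "enat M \<noteq> \<infinity>" by auto
  have yj: "y!j = enat M" by (rule Y.C1(1)[OF yj0 jj(1) jN bnd wj ee])
  have yfar: "\<And>q. q < N \<Longrightarrow> off N j0 j < off N j0 q \<Longrightarrow> jump y j0 ! q = y!q"
    using Y.C1(2)[OF yj0 jj(1) jN bnd wj ee] ylen by simp
  obtain q where q: "j0 < q" "q \<le> j" "jump y j0 ! q = y!j0" using Y.C1(3)[OF yj0 jj(1) jN bnd wj ee] by blast
  have uqy: "u!q = y!j0" using q jy jj by (simp add: nth_append)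
  have qk: "q < k" using q jj by simp
  have qin: "u!q \<in> set u" by (rule nth_mem[OF qk])
  have dv: "drop k y = v"
  proof (rule nth_equalityI)
    show "length (drop k y) = length v" using ylen by simp
    fix p assume p: "p < length (drop k y)"
    have kp: "k + p < N" using p ylen by simp
    have o1: "off N j0 (k + p) = k + p - j0" using off_eq[OF j0N kp] j0u by simp
    have o2: "off N j0 j = j - j0" using off_eq[OF j0N] jj by simp
    have "off N j0 j < off N j0 (k + p)" using o1 o2 jj by simp
    hence "y ! (k + p) = (u @ v) ! (k + p)" using yfar[OF kp] jy by simp
    thus "drop k y ! p = v ! p" using p ylen by (simp add: nth_append)
  qed
  define u'' where "u'' = take k y"
  have yuv: "y = u'' @ v" using append_take_drop_id[of k y] dv u''_def by simp
  have u''len: "length u'' = k" using ylen u''_def by simp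
  have u''j0: "u''!j0 = y!j0" using u''_def j0u by simp
  have jr: "jump (u'' @ v) j0 = jump u'' j0 @ v"
  proof (rule ring_conv)
    show "j0 < length u''" using u''len j0u by simp
    show "u''!j0 \<noteq> \<infinity>" using u''j0 yj0 by simp
    fix e assume "e \<in> set v" "e \<noteq> \<infinity>"
    hence "e < u!q" using vlt qin by simp
    thus "e \<le> u''!j0" using uqy u''j0 by simp
  qed
  have ju: "jump u'' j0 = u" using jr jy yuv by simp
  have u''U: "u'' \<in> U"
    unfolding U_def
  proof (intro CollectI conjI)
    show "length u'' = length u" by (rule u''len)
    show "is_word u''" unfolding is_word_def
    proof
      fix e assume e: "e \<in> set u''"
      then obtain p where p: "p < k" "u''!p = e" using u''len by (auto simp: in_set_conv_nth)
      have "u''!p = y!p" using p u''_def by simp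
      thus "e \<noteq> 0" using yr[of p] p jj by (cases "y!p = \<infinity>") auto
    qed
    show "\<forall>x\<in>set u''. x \<noteq> \<infinity> \<longrightarrow> x \<le> enat (maxsize (u @ v))"
    proof (intro ballI impI)
      fix e assume e: "e \<in> set u''" "e \<noteq> \<infinity>"
      then obtain p where p: "p < k" "u''!p = e" using u''len by (auto simp: in_set_conv_nth)
      have "u''!p = y!p" using p u''_def by simp
      thus "e \<le> enat (maxsize (u @ v))" using yr[of p] p e Mr' by simp
    qed
    show "u''!j0 \<noteq> \<infinity>" using u''j0 yj0 by simp
    show "jump u'' j0 = u" by (rule ju)
  qed
  have fT: "fS j0 Ts = Ts0 @ [T']" unfolding fS_def m(2) T'_def by simp
  have mwf: "mlq_word N (fS j0 Ts) = y"
    unfolding fT y_def x_def r_def mlq_word_def mlq_out_snoc by simp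
  have "gS j0 (fS j0 Ts) = Ts0 @ [T' - {j0}]" unfolding fT gS_def by simp
  thus "gS j0 (fS j0 Ts) = Ts" using m(2) T'_def j0T by simp
  show "take k (mlq_word N (fS j0 Ts)) \<in> U" using mwf u''_def u''U by simp
  have cT': "card T' = sum_list (butlast m) + (last m + 1)"
    using sp(4) smm j0T T'_def Q.finT by simp
  have im: "is_mlq N (butlast m @ [last m + 1]) (Ts0 @ [T'])" by (rule mlq_mod[OF m(1) T'n _ cT']) simp
  have tv: "take k y @ v = y" using append_take_drop_id[of k y] dv by simp
  show "fS j0 Ts \<in> SS (take k (mlq_word N (fS j0 Ts)) @ v)"
    unfolding SS_def mwf tv using im fT mwf by auto
  have hq: "\<forall>q. j0 < q \<and> q \<le> j \<longrightarrow> q \<in> T"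
  proof (intro allI impI)
    fix q assume "j0 < q \<and> q \<le> j"
    hence "(u @ v)!q \<noteq> \<infinity>" "q < N" using fin_between jj by auto
    thus "q \<in> T" using Q.out_fin_iff wq by simp
  qed
  have yjr: "queue_out N (insert j0 T) (Suc (length Ts0)) (mlq_word N Ts0) ! j = enat (Suc (length Ts0))"
    using yj Mr' unfolding y_def T'_def r_def x_def by simp
  have wt: "queue_wt t N T r x = t (the_enat (y ! j0)) * queue_wt t N T' r x"
    using core(2)[OF sp(5) sp(3) j0N j0T jj(1) _ hq yjr, of t] jj unfolding y_def T'_def r_def x_def by simp
  have w1: "mlq_weight t N Ts = mlq_weight t N Ts0 * queue_wt t N T r x"
    unfolding mlq_weight_def m(2) mlq_wt_snoc r_def x_def mlq_word_def by simp
  have w2: "mlq_weight t N (fS j0 Ts) = mlq_weight t N Ts0 * queue_wt t N T' r x"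
    unfolding mlq_weight_def fT mlq_wt_snoc r_def x_def mlq_word_def by simp
  show "t (the_enat (take k (mlq_word N (fS j0 Ts)) ! j0)) * mlq_weight t N (fS j0 Ts) = mlq_weight t N Ts"
    using w1 w2 wt mwf u''j0 u''_def by (simp add: mult.commute mult.left_commute)
qed

end


context mctx begin

lemma BWD: assumes u'U: "u' \<in> U" and TsS: "Ts' \<in> SS (u' @ v)"
  shows "gS j0 Ts' \<in> SS (u @ v)" "fS j0 (gS j0 Ts') = Ts'" "take k (mlq_word N Ts') = u'"
proof -
  have u': "length u' = k" "u'!j0 \<noteq> \<infinity>" "jump u' j0 = u" "\<And>x. x \<in> set u' \<Longrightarrow> x \<noteq> \<infinity> \<Longrightarrow> x \<le> enat M"
    using u'U unfolding U_def by auto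
  have mw: "mlq_word N Ts' = u' @ v" using TsS unfolding SS_def by blast
  show "take k (mlq_word N Ts') = u'" using mw u'(1) by simp
  obtain m Ts0 T' where m: "is_mlq N m (Ts0 @ [T'])" "Ts' = Ts0 @ [T']"
     "queue_out N T' (Suc (length Ts0)) (mlq_word N Ts0) = u' @ v"
    using SS_split[OF TsS] by blast
  note sp = mlq_split[OF m(1)]
  define r where "r = Suc (length Ts0)"
  define x where "x = mlq_word N Ts0"
  have wq': "queue_out N T' r x = u' @ v" using m(3) r_def x_def by simp
  have lvx: "length x = N" "\<And>p. p < N \<Longrightarrow> x!p \<noteq> \<infinity> \<Longrightarrow> x!p < enat r \<and> x!p \<noteq> 0"
    "\<And>p. p < N \<Longrightarrow> x!p \<noteq> \<infinity> \<longleftrightarrow> (Ts0 \<noteq> [] \<and> p \<in> last Ts0)"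
    using level[OF sp(5)] unfolding x_def r_def by auto
  have xpos: "\<And>p. p < N \<Longrightarrow> x!p \<noteq> 0"
  proof -
    fix p assume p: "p < N"
    show "x!p \<noteq> 0"
    proof (cases "x!p = \<infinity>")
      case True thus ?thesis by simp
    next
      case False thus ?thesis using lvx(2)[OF p False] by simp
    qed
  qed
  have xf: "\<And>p. p < N \<Longrightarrow> x!p \<noteq> \<infinity> \<Longrightarrow> x!p < enat r" using lvx(2) by blast
  interpret Q': qout N T' r x by unfold_locales (use sp(3) lvx(1) xpos xf in \<open>auto simp: r_def\<close>)
  have j0N: "j0 < N" using j0u by simp
  have j0T': "j0 \<in> T'" using Q'.out_fin_iff[OF j0N] wq' u' j0u by (simp add: nth_append)
  define T where "T = T' - {j0}"
  have Tn: "T \<subseteq> {..<N}" using sp(3) T_def by auto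
  have j0T: "j0 \<notin> T" using T_def by simp
  have iT: "insert j0 T = T'" using j0T' T_def by auto
  have wq: "queue_out N T r x = u @ v"
    using core(1)[OF sp(5) Tn j0N j0T] iT wq' UP(3)[OF u'U] unfolding r_def x_def by simp
  interpret Q: qout N T r x by unfold_locales (use Tn lvx(1) xpos xf in \<open>auto simp: r_def\<close>)
  have cset: "{p. p < N \<and> x!p \<noteq> \<infinity>} = (if Ts0 = [] then {} else last Ts0)"
  proof -
    have "Ts0 \<noteq> [] \<Longrightarrow> last Ts0 \<subseteq> {..<N}" using sp(5) by simp
    thus ?thesis using lvx(3) by auto
  qed
  have cc: "Q.c = sum_list (butlast m)"
  proof (cases "Ts0 = []")
    case True
    hence "butlast m = []" using sp(2) by (metis length_0_conv)
    thus ?thesis unfolding Q.c_def cset using True by simp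
  next
    case False thus ?thesis unfolding Q.c_def cset using sp(7) by simp
  qed
  have cc': "Q'.c = Q.c" unfolding Q.c_def Q'.c_def ..
  have smm0: "sum_list (butlast m @ [last m]) = sum_list (butlast m) + last m" by simp
  have smm: "sum_list m = sum_list (butlast m) + last m" using smm0 sp(1)[symmetric] by simp
  have cT': "Q'.c < card T'" using cc cc' sp(4,6) smm by simp
  obtain q0 where q0: "q0 < N" "queue_out N T' r x ! q0 = enat r" using Q'.has_i[OF cT'] by blast
  have "enat r \<le> enat M"
  proof (cases "q0 < k")
    case True
    have "u'!q0 = enat r" using q0 wq' True u'(1) by (simp add: nth_append)
    moreover have "u'!q0 \<in> set u'" using True u'(1) by simp
    ultimately show ?thesis using u'(4) by fastforce
  next
    case False
    have e: "(u' @ v)!q0 = v!(q0 - k)" using False u'(1) by (simp add: nth_append)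
    have "q0 - k < length v" using q0 False by simp
    hence "v!(q0 - k) \<in> set v" by simp
    hence "v!(q0 - k) < enat M" by (rule vM)
    thus ?thesis using e q0 wq' by simp
  qed
  hence rM: "r \<le> M" by simp
  have jN: "j < N" using jj by simp
  have "(u @ v)!j \<noteq> 0 \<and> (u @ v)!j \<le> enat r" using Q.out_range[OF jN] wq uj jj by (simp add: nth_append)
  hence Mr: "M \<le> r" using uj jj by (simp add: nth_append)
  have Mr': "M = r" using rM Mr by simp
  have cT: "Q.c < card T"
  proof (rule ccontr)
    assume "\<not> Q.c < card T"
    hence "queue_out N T r x ! j \<noteq> enat r" using Q.no_i[OF _ jN] by simp
    thus False using wq uj jj Mr' by (simp add: nth_append)
  qed
  have cTe: "card T = sum_list (butlast m) + (card T - sum_list (butlast m))" using cT cc by simp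
  have im: "is_mlq N (butlast m @ [card T - sum_list (butlast m)]) (Ts0 @ [T])"
    by (rule mlq_mod[OF m(1) Tn _ cTe]) (use cT cc in simp)
  have gT: "gS j0 Ts' = Ts0 @ [T]" unfolding gS_def m(2) T_def by simp
  have "mlq_word N (Ts0 @ [T]) = u @ v"
    unfolding mlq_word_def mlq_out_snoc using wq unfolding r_def x_def mlq_word_def by simp
  thus "gS j0 Ts' \<in> SS (u @ v)" unfolding SS_def gT using im by blast
  have "fS j0 (gS j0 Ts') = Ts0 @ [insert j0 T]" unfolding gT fS_def by simp
  thus "fS j0 (gS j0 Ts') = Ts'" using iT m(2) by simp
qed

lemma finSS: "finite (SS w)"
proof -
  have "SS w \<subseteq> {Ts. set Ts \<subseteq> Pow {..<N} \<and> length Ts \<le> N}"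
  proof
    fix Ts assume "Ts \<in> SS w"
    then obtain m where m: "is_mlq N m Ts" unfolding SS_def by blast
    have "length m \<le> sum_list m" using m by (intro sum_ge_len) (simp add: is_mlq_def is_type_def)
    hence "length Ts \<le> N" using m by (simp add: is_mlq_def is_type_def)
    moreover have "set Ts \<subseteq> Pow {..<N}"
    proof
      fix T assume "T \<in> set Ts"
      then obtain l where "l < length Ts" "Ts ! l = T" by (auto simp: in_set_conv_nth)
      thus "T \<in> Pow {..<N}" using m by (auto simp: is_mlq_def)
    qed
    ultimately show "Ts \<in> {Ts. set Ts \<subseteq> Pow {..<N} \<and> length Ts \<le> N}" by simp
  qed
  moreover have "finite {Ts. set Ts \<subseteq> Pow {..<N} \<and> length Ts \<le> N}" by (rule finite_lists_length_le) simp
  ultimately show ?thesis by (rule finite_subset)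
qed

lemma finU: "finite U"
proof -
  have "U \<subseteq> {xs. set xs \<subseteq> insert \<infinity> (enat ` {..M}) \<and> length xs = k}"
  proof
    fix xs assume "xs \<in> U"
    hence xs: "length xs = k" "\<And>e. e \<in> set xs \<Longrightarrow> e \<noteq> \<infinity> \<Longrightarrow> e \<le> enat M" unfolding U_def by auto
    have "set xs \<subseteq> insert \<infinity> (enat ` {..M})"
    proof
      fix e assume e: "e \<in> set xs"
      show "e \<in> insert \<infinity> (enat ` {..M})"
      proof (cases e)
        case (enat a) thus ?thesis using xs(2)[OF e] by auto
      next
        case infinity thus ?thesis by simp
      qed
    qed
    thus "xs \<in> {xs. set xs \<subseteq> insert \<infinity> (enat ` {..M}) \<and> length xs = k}" using xs(1) by simp
  qed
  moreover have "finite {xs. set xs \<subseteq> insert \<infinity> (enat ` {..M}) \<and> length xs = k}"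
    by (rule finite_lists_length_eq) simp
  ultimately show ?thesis by (rule finite_subset)
qed

lemma ww: "length w = N \<Longrightarrow> word_weight t w = (\<Sum>Ts\<in>SS w. mlq_weight t N Ts)"
  unfolding word_weight_def SS_def by simp

theorem part1: "word_weight t (u @ v) = (\<Sum>u'\<in>U. t (the_enat (u' ! j0)) * word_weight t (u' @ v))"
proof -
  have lenU: "\<And>u'. u' \<in> U \<Longrightarrow> length (u' @ v) = N" unfolding U_def by simp
  have "(\<Sum>u'\<in>U. t (the_enat (u' ! j0)) * word_weight t (u' @ v)) =
        (\<Sum>u'\<in>U. \<Sum>Ts\<in>SS (u' @ v). t (the_enat (u' ! j0)) * mlq_weight t N Ts)"
  proof (rule sum.cong)
    fix x assume x: "x \<in> U"
    show "t (the_enat (x ! j0)) * word_weight t (x @ v) = (\<Sum>Ts\<in>SS (x @ v). t (the_enat (x ! j0)) * mlq_weight t N Ts)"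
      unfolding ww[OF lenU[OF x]] by (simp add: sum_distrib_left)
  qed simp
  also have "\<dots> = (\<Sum>p\<in>Sigma U (\<lambda>u'. SS (u' @ v)). t (the_enat (fst p ! j0)) * mlq_weight t N (snd p))"
    using sum.Sigma[OF finU, of "\<lambda>u'. SS (u' @ v)" "\<lambda>u' Ts. t (the_enat (u' ! j0)) * mlq_weight t N Ts"] finSS
    by (simp add: case_prod_beta)
  finally have R: "(\<Sum>u'\<in>U. t (the_enat (u' ! j0)) * word_weight t (u' @ v)) =
     (\<Sum>p\<in>Sigma U (\<lambda>u'. SS (u' @ v)). t (the_enat (fst p ! j0)) * mlq_weight t N (snd p))" .
  have L: "word_weight t (u @ v) = (\<Sum>Ts\<in>SS (u @ v). mlq_weight t N Ts)" by (rule ww) simp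
  have "(\<Sum>Ts\<in>SS (u @ v). mlq_weight t N Ts) =
        (\<Sum>p\<in>Sigma U (\<lambda>u'. SS (u' @ v)). t (the_enat (fst p ! j0)) * mlq_weight t N (snd p))"
  proof (rule sum.reindex_bij_witness[where i = "\<lambda>p. gS j0 (snd p)" and j = "\<lambda>Ts. (take k (mlq_word N (fS j0 Ts)), fS j0 Ts)"])
    fix a assume a: "a \<in> SS (u @ v)"
    show "gS j0 (snd (take k (mlq_word N (fS j0 a)), fS j0 a)) = a" using FWD(1)[OF a] by simp
    show "(take k (mlq_word N (fS j0 a)), fS j0 a) \<in> Sigma U (\<lambda>u'. SS (u' @ v))" using FWD(2,3)[OF a] by simp
    show "t (the_enat (fst (take k (mlq_word N (fS j0 a)), fS j0 a) ! j0)) * mlq_weight t N (snd (take k (mlq_word N (fS j0 a)), fS j0 a)) =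
          mlq_weight t N a" using FWD(4)[OF a] by simp
  next
    fix b assume b: "b \<in> Sigma U (\<lambda>u'. SS (u' @ v))"
    then obtain u' Ts' where bb: "b = (u', Ts')" "u' \<in> U" "Ts' \<in> SS (u' @ v)" by auto
    show "(take k (mlq_word N (fS j0 (gS j0 (snd b)))), fS j0 (gS j0 (snd b))) = b"
      using BWD[OF bb(2,3)] bb(1) by simp
    show "gS j0 (snd b) \<in> SS (u @ v)" using BWD[OF bb(2,3)] bb(1) by simp
  qed
  thus ?thesis using L R by simp
qed

end


theorem lemma5p4:
  fixes t :: "nat \<Rightarrow> 'a::comm_semiring_1" and u v :: "enat list" and j0 :: nat
  assumes "is_word (u @ v)"
    and "u \<noteq> []" and "v \<noteq> []"
    and "\<forall>a\<in>set u. \<forall>b\<in>set v. b < a"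
    and "j0 < length u" and "u ! j0 = \<infinity>"
    and "\<exists>j. j0 < j \<and> j < length u \<and> u ! j \<noteq> \<infinity> \<and> (\<forall>x\<in>set (u @ v). x \<noteq> \<infinity> \<longrightarrow> x \<le> u ! j)
           \<and> (\<forall>i. j0 < i \<and> i < j \<longrightarrow> u ! i \<noteq> \<infinity> \<and> u ! i \<noteq> u ! j)"
  shows "word_weight t (u @ v) =
           (\<Sum>u'\<in>{u'. length u' = length u \<and> is_word u'
                     \<and> (\<forall>x\<in>set u'. x \<noteq> \<infinity> \<longrightarrow> x \<le> enat (maxsize (u @ v)))
                     \<and> u' ! j0 \<noteq> \<infinity> \<and> jump u' j0 = u}.
              t (the_enat (u' ! j0)) * word_weight t (u' @ v))
         \<and> (\<forall>u'. length u' = length u \<and> is_word u'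
                     \<and> (\<forall>x\<in>set u'. x \<noteq> \<infinity> \<longrightarrow> x \<le> enat (maxsize (u @ v)))
                     \<and> u' ! j0 \<noteq> \<infinity> \<and> jump u' j0 = u
              \<longrightarrow> decomposable (u' @ v) \<and> simpler (u' @ v) (u @ v))"
proof -
  obtain j where hj: "j0 < j" "j < length u" "u ! j \<noteq> \<infinity>" "\<forall>x\<in>set (u @ v). x \<noteq> \<infinity> \<longrightarrow> x \<le> u ! j"
     "\<forall>i. j0 < i \<and> i < j \<longrightarrow> u ! i \<noteq> \<infinity> \<and> u ! i \<noteq> u ! j" using assms(7) by blast
  interpret mctx u v j0 j by unfold_locales (use assms hj in auto)
  have p1: "word_weight t (u @ v) = (\<Sum>u'\<in>U. t (the_enat (u' ! j0)) * word_weight t (u' @ v))" by (rule part1)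
  show ?thesis
  proof
    show "word_weight t (u @ v) =
           (\<Sum>u'\<in>{u'. length u' = length u \<and> is_word u'
                     \<and> (\<forall>x\<in>set u'. x \<noteq> \<infinity> \<longrightarrow> x \<le> enat (maxsize (u @ v)))
                     \<and> u' ! j0 \<noteq> \<infinity> \<and> jump u' j0 = u}.
              t (the_enat (u' ! j0)) * word_weight t (u' @ v))" using p1 unfolding U_def .
    show "\<forall>u'. length u' = length u \<and> is_word u'
                     \<and> (\<forall>x\<in>set u'. x \<noteq> \<infinity> \<longrightarrow> x \<le> enat (maxsize (u @ v)))
                     \<and> u' ! j0 \<noteq> \<infinity> \<and> jump u' j0 = u
              \<longrightarrow> decomposable (u' @ v) \<and> simpler (u' @ v) (u @ v)"
      using part2 unfolding U_def by blast
  qed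
qed

end
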